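(* Let $p$ be a positive integer and let $a_1,\ldots,a_{2p-1}$ be real, distinct, non-zero numbers, with $A_j:=A(a_j)$, $P_a$ and $M_{m,p,a}$ as defined below. For each integer $m\ge0$, the Fischer operator $F_a:\mathcal P_m\to\mathcal P_m$, $F_a(q):=\Delta^p(P_aq)$, is a bijection if and only if $\det M_{m,p,a}\neq0$. Moreover, there is a constant $C\ge0$, independent of $m$, such that whenever $\det M_{m,p,a}\ne0$, $$\|P_aq\|\leq\frac{C}{|\det M_{m,p,a}|}\,\|\Delta^p(P_aq)\|\quad\text{for all } q\in\mathcal P_m.$$
   Context: $\mathcal P_m$ is the space of homogeneous polynomials of degree $m$ in $(x,y)$ with complex coefficients. $\|\cdot\|$ is the norm of the real Fischer inner product $\langle f,g\rangle=\int_{\mathbb R^2}f(x,y)\overline{g(x,y)}e^{-(x^2+y^2)}\,dx\,dy$ on $\mathbb C[x,y]$. $\Delta=\partial_x^2+\partial_y^2$. For real $a$, $A(a):=\frac{a+i}{a-i}$. $P_a(x,y):=y\prod_{j=1}^{2p-1}(x-a_jy)$. For $m\ge0$, $M_{m,p,a}$ is the $2p\times2p$ matrix whose first row is $(1,\ldots,1)$ and whose $(j+1)$-th row, $j=1,\ldots,2p-1$, is $(1,A_j,\ldots,A_j^{p-1},A_j^{m+p+1},\ldots,A_j^{m+2p})$. *)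

theory Defs
  imports "HOL-Analysis.Analysis" "HOL-Computational_Algebra.Polynomial"
    "Jordan_Normal_Form.Determinant"
begin

text \<open>Polynomials in two variables (x,y) with complex coefficients, represented as
  polynomials in x whose coefficients are polynomials in y: the monomial x^i y^j
  has coefficient  coeff (coeff P i) j.\<close>

type_synonym bpoly = "complex poly poly"

definition bX :: bpoly where "bX = [:0, 1:]"
definition bY :: bpoly where "bY = [:[:0, 1:]:]"
definition bconst :: "complex \<Rightarrow> bpoly" where "bconst c = [:[:c:]:]"

definition beval :: "bpoly \<Rightarrow> real \<Rightarrow> real \<Rightarrow> complex" where
  "beval P x y = poly (map_poly (\<lambda>c. poly c (complex_of_real y)) P) (complex_of_real x)"

definition homog_polys :: "nat \<Rightarrow> bpoly set" where
  "homog_polys m = {P. \<forall>i j. coeff (coeff P i) j \<noteq> 0 \<longrightarrow> i + j = m}"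

definition laplace :: "bpoly \<Rightarrow> bpoly" where
  "laplace P = pderiv (pderiv P) + map_poly (\<lambda>c. pderiv (pderiv c)) P"

definition fischer_norm :: "bpoly \<Rightarrow> real" where
  "fischer_norm P = sqrt (integral\<^sup>L (lborel :: (real \<times> real) measure)
      (\<lambda>(x, y). (cmod (beval P x y))\<^sup>2 * exp (- (x\<^sup>2 + y\<^sup>2))))"

definition Amap :: "real \<Rightarrow> complex" where
  "Amap a = (complex_of_real a + \<i>) / (complex_of_real a - \<i>)"

definition Pa :: "nat \<Rightarrow> (nat \<Rightarrow> real) \<Rightarrow> bpoly" where
  "Pa p a = bY * (\<Prod>j\<in>{1..2*p-1}. bX - bconst (complex_of_real (a j)) * bY)"

text \<open>The 2p x 2p matrix M_{m,p,a} (rows/columns indexed from 0): row 0 is all ones;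
  row j (1 \<le> j \<le> 2p-1) is (1, A_j, ..., A_j^(p-1), A_j^(m+p+1), ..., A_j^(m+2p)).\<close>
definition Mmat :: "nat \<Rightarrow> nat \<Rightarrow> (nat \<Rightarrow> real) \<Rightarrow> complex mat" where
  "Mmat m p a = mat (2*p) (2*p) (\<lambda>(i, k).
      if i = 0 then 1
      else if k < p then Amap (a i) ^ k
      else Amap (a i) ^ (m + 1 + k))"

end

theory Submission
  imports Defs "HOL-Probability.Distributions"
begin

definition Dy :: "bpoly \<Rightarrow> bpoly" where "Dy P = map_poly pderiv P"

lemma coeff_Dy: "coeff (Dy P) n = pderiv (coeff P n)"
  unfolding Dy_def by (simp add: coeff_map_poly)

lemma Dy_add: "Dy (P + Q) = Dy P + Dy Q"
  by (rule poly_eqI) (simp add: coeff_Dy pderiv_add)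

lemma Dy_diff: "Dy (P - Q) = Dy P - Dy Q"
  by (rule poly_eqI) (simp add: coeff_Dy pderiv_diff)

lemma Dy_minus: "Dy (- P) = - Dy P"
  by (rule poly_eqI) (simp add: coeff_Dy pderiv_minus)

lemma Dy_0[simp]: "Dy 0 = 0"
  by (rule poly_eqI) (simp add: coeff_Dy)

lemma Dy_sum: "Dy (\<Sum>i\<in>A. f i) = (\<Sum>i\<in>A. Dy (f i))"
  by (induction A rule: infinite_finite_induct) (auto simp: Dy_add)

lemma pderiv_sum': "pderiv (\<Sum>i\<in>A. f i) = (\<Sum>i\<in>A. pderiv (f i))"
  by (induction A rule: infinite_finite_induct) (auto simp: pderiv_add)

lemma Dy_mult: "Dy (P * Q) = Dy P * Q + P * Dy Q"
proof (rule poly_eqI)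
  fix n
  show "coeff (Dy (P * Q)) n = coeff (Dy P * Q + P * Dy Q) n"
    apply (simp add: coeff_Dy coeff_mult pderiv_sum' pderiv_mult flip: sum.distrib)
    apply (rule sum.cong) apply (auto simp: ac_simps)
    done
qed

lemma bconst_0[simp]: "bconst 0 = 0" and bconst_1[simp]: "bconst 1 = 1"
  by (simp_all add: bconst_def one_pCons)

lemma bconst_add: "bconst (a + b) = bconst a + bconst b"
  by (simp add: bconst_def)
lemma bconst_mult: "bconst (a * b) = bconst a * bconst b"
  by (simp add: bconst_def)
lemma bconst_diff: "bconst (a - b) = bconst a - bconst b"
  by (simp add: bconst_def)
lemma bconst_minus: "bconst (- a) = - bconst a"
  by (simp add: bconst_def)
lemma bconst_of_nat: "bconst (of_nat n) = of_nat n"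
  by (induction n) (auto simp: bconst_add)
lemma bconst_power: "bconst (a ^ n) = bconst a ^ n"
  by (induction n) (auto simp: bconst_mult)
lemma bconst_sum: "bconst (\<Sum>i\<in>A. f i) = (\<Sum>i\<in>A. bconst (f i))"
  by (induction A rule: infinite_finite_induct) (auto simp: bconst_add)
lemma bconst_prod: "bconst (\<Prod>i\<in>A. f i) = (\<Prod>i\<in>A. bconst (f i))"
  by (induction A rule: infinite_finite_induct) (auto simp: bconst_mult)

lemma Dy_bconst[simp]: "Dy (bconst c) = 0"
  by (rule poly_eqI) (simp add: coeff_Dy bconst_def coeff_pCons split: nat.splits)
lemma Dx_bconst[simp]: "pderiv (bconst c) = 0"
  by (simp add: bconst_def)

lemma Dx_bconst_mult: "pderiv (bconst c * P) = bconst c * pderiv P"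
  by (simp add: pderiv_mult)
lemma Dy_bconst_mult: "Dy (bconst c * P) = bconst c * Dy P"
  by (simp add: Dy_mult)

lemma Dx_Dy_comm: "pderiv (Dy P) = Dy (pderiv P)"
  by (rule poly_eqI) (simp add: coeff_Dy coeff_pderiv pderiv_smult[symmetric] of_nat_poly)

lemma laplace_alt: "laplace P = pderiv (pderiv P) + Dy (Dy P)"
  unfolding laplace_def Dy_def
  by (simp add: map_poly_map_poly o_def)

definition Dz :: "bpoly \<Rightarrow> bpoly" where
  "Dz P = bconst (1/2) * (pderiv P - bconst \<i> * Dy P)"
definition Dzb :: "bpoly \<Rightarrow> bpoly" where
  "Dzb P = bconst (1/2) * (pderiv P + bconst \<i> * Dy P)"

lemma Dz_add: "Dz (P + Q) = Dz P + Dz Q"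
  by (simp add: Dz_def pderiv_add Dy_add algebra_simps)
lemma Dzb_add: "Dzb (P + Q) = Dzb P + Dzb Q"
  by (simp add: Dzb_def pderiv_add Dy_add algebra_simps)
lemma Dz_mult: "Dz (P * Q) = Dz P * Q + P * Dz Q"
  by (simp add: Dz_def pderiv_mult Dy_mult algebra_simps)
lemma Dzb_mult: "Dzb (P * Q) = Dzb P * Q + P * Dzb Q"
  by (simp add: Dzb_def pderiv_mult Dy_mult algebra_simps)
lemma Dz_bconst[simp]: "Dz (bconst c) = 0"
  by (simp add: Dz_def)
lemma Dzb_bconst[simp]: "Dzb (bconst c) = 0"
  by (simp add: Dzb_def)
lemma Dz_bconst_mult: "Dz (bconst c * P) = bconst c * Dz P"
  by (simp add: Dz_mult)
lemma Dzb_bconst_mult: "Dzb (bconst c * P) = bconst c * Dzb P"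
  by (simp add: Dzb_mult)

lemma laplace_Dz_Dzb: "laplace P = 4 * Dz (Dzb P)"
proof -
  define h where "h = bconst (1/2)"
  define I where "I = bconst \<i>"
  have II: "I * I = - 1" unfolding I_def by (simp only: flip: bconst_mult) (simp add: bconst_minus)
  have hh: "4 * (h * h) = 1"
  proof -
    have a: "bconst (1/2) * bconst (1/2) = bconst (1/4)" by (simp flip: bconst_mult)
    have b: "(4::bpoly) = bconst 4" using bconst_of_nat[of 4] by simp
    have "bconst 4 * bconst (1/4) = bconst (4 * (1/4))" by (simp only: bconst_mult)
    then show ?thesis by (simp add: a b h_def)
  qed
  have 1: "pderiv (Dzb P) = h * (pderiv (pderiv P) + I * Dy (pderiv P))"
    by (simp add: Dzb_def Dx_bconst_mult pderiv_add h_def I_def Dx_Dy_comm)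
  have 2: "Dy (Dzb P) = h * (Dy (pderiv P) + I * Dy (Dy P))"
    by (simp add: Dzb_def Dy_bconst_mult Dy_add h_def I_def)
  have "Dz (Dzb P) = h * (h * (pderiv (pderiv P) + I * Dy (pderiv P)) - I * (h * (Dy (pderiv P) + I * Dy (Dy P))))"
    by (simp add: Dz_def 1 2 h_def I_def)
  also have "\<dots> = (h * h) * (pderiv (pderiv P) - (I * I) * Dy (Dy P))"
    by (simp add: algebra_simps)
  finally have "4 * Dz (Dzb P) = (4 * (h * h)) * (pderiv (pderiv P) - (I * I) * Dy (Dy P))"
    by (simp add: mult.assoc)
  then show ?thesis using II hh by (simp add: laplace_alt)
qed

definition Z :: bpoly where "Z = bX + bconst \<i> * bY"
definition Zb :: bpoly where "Zb = bX - bconst \<i> * bY"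

lemma Dx_bX[simp]: "pderiv bX = 1" by (simp add: bX_def pderiv_pCons)
lemma Dy_bX[simp]: "Dy bX = 0" by (rule poly_eqI) (simp add: coeff_Dy bX_def coeff_pCons split: nat.splits)
lemma Dx_bY[simp]: "pderiv bY = 0" by (simp add: bY_def)
lemma Dy_bY[simp]: "Dy bY = 1"
  by (rule poly_eqI) (simp add: coeff_Dy bY_def coeff_pCons pderiv_pCons one_pCons split: nat.splits)

lemma Dz_Z[simp]: "Dz Z = 1"
proof -
  have "Dz Z = bconst (1/2) * (1 - bconst \<i> * bconst \<i>)"
    by (simp add: Dz_def Z_def pderiv_add Dy_add Dx_bconst_mult Dy_bconst_mult)
  also have "\<dots> = bconst ((1/2) * (1 - \<i> * \<i>))" by (simp only: bconst_mult bconst_diff bconst_1)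
  finally show ?thesis by simp
qed
lemma Dzb_Z[simp]: "Dzb Z = 0"
proof -
  have "Dzb Z = bconst (1/2) * (1 + bconst \<i> * bconst \<i>)"
    by (simp add: Dzb_def Z_def pderiv_add Dy_add Dx_bconst_mult Dy_bconst_mult)
  also have "\<dots> = bconst ((1/2) * (1 + \<i> * \<i>))" by (simp only: bconst_mult bconst_add bconst_1)
  finally show ?thesis by simp
qed
lemma Dz_Zb[simp]: "Dz Zb = 0"
proof -
  have "Dz Zb = bconst (1/2) * (1 + bconst \<i> * bconst \<i>)"
    by (simp add: Dz_def Zb_def pderiv_diff Dy_diff Dx_bconst_mult Dy_bconst_mult)
  also have "\<dots> = bconst ((1/2) * (1 + \<i> * \<i>))" by (simp only: bconst_mult bconst_add bconst_1)
  finally show ?thesis by simp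
qed
lemma Dzb_Zb[simp]: "Dzb Zb = 1"
proof -
  have "Dzb Zb = bconst (1/2) * (1 - bconst \<i> * bconst \<i>)"
    by (simp add: Dzb_def Zb_def pderiv_diff Dy_diff Dx_bconst_mult Dy_bconst_mult)
  also have "\<dots> = bconst ((1/2) * (1 - \<i> * \<i>))" by (simp only: bconst_mult bconst_diff bconst_1)
  finally show ?thesis by simp
qed

lemma Dz_1[simp]: "Dz 1 = 0" using Dz_bconst[of 1] by simp
lemma Dzb_1[simp]: "Dzb 1 = 0" using Dzb_bconst[of 1] by simp

lemma Dz_power: "Dz (P ^ n) = of_nat n * P ^ (n - 1) * Dz P"
proof (induction n)
  case (Suc n) then show ?case
    by (cases n) (auto simp: Dz_mult algebra_simps)
qed simp

lemma Dzb_power: "Dzb (P ^ n) = of_nat n * P ^ (n - 1) * Dzb P"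
proof (induction n)
  case (Suc n) then show ?case
    by (cases n) (auto simp: Dzb_mult algebra_simps)
qed simp

lemma Dz_of_nat_mult: "Dz (of_nat n * P) = of_nat n * Dz P"
  using Dz_bconst_mult[of "of_nat n" P] by (simp add: bconst_of_nat)

lemma Dzb_ZZb: "Dzb (Z ^ a * Zb ^ b) = of_nat b * Z ^ a * Zb ^ (b - 1)"
  by (simp add: Dzb_mult Dzb_power Dz_power)

lemma Dz_ZZb: "Dz (Z ^ a * Zb ^ b) = of_nat a * Z ^ (a - 1) * Zb ^ b"
  by (simp add: Dz_mult Dzb_power Dz_power)

lemma laplace_ZZb: "laplace (Z ^ a * Zb ^ b) = bconst (4 * of_nat a * of_nat b) * Z ^ (a - 1) * Zb ^ (b - 1)"
proof -
  have "laplace (Z ^ a * Zb ^ b) = 4 * Dz (of_nat b * (Z ^ a * Zb ^ (b - 1)))"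
    by (simp add: laplace_Dz_Dzb Dzb_ZZb mult.assoc)
  also have "\<dots> = 4 * of_nat b * of_nat a * Z ^ (a - 1) * Zb ^ (b - 1)"
    by (simp add: Dz_of_nat_mult Dz_ZZb mult.assoc)
  also have "(4::bpoly) * of_nat b * of_nat a = bconst (4 * of_nat a * of_nat b)"
    using bconst_of_nat[of 4] by (simp add: bconst_mult bconst_of_nat)
  finally show ?thesis .
qed

definition E :: "nat \<Rightarrow> nat \<Rightarrow> bpoly" where "E N j = Z ^ j * Zb ^ (N - j)"

lemma laplace_E: "laplace (E N j) = bconst (4 * of_nat j * of_nat (N - j)) * E (N - 2) (j - 1)"
proof (cases "1 \<le> j \<and> 1 \<le> N - j")
  case True
  then have "N - j - 1 = N - 2 - (j - 1)" by simp
  then show ?thesis unfolding E_def laplace_ZZb by (simp add: mult.assoc)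
next
  case False
  then have "j = 0 \<or> N - j = 0" by auto
  then have 0: "bconst (4 * of_nat j * of_nat (N - j)) = 0" by (metis bconst_0 mult_zero_left mult_zero_right of_nat_0)
  show ?thesis unfolding E_def laplace_ZZb 0 by simp
qed

lemma laplace_add: "laplace (P + Q) = laplace P + laplace Q"
  by (simp add: laplace_alt pderiv_add Dy_add)
lemma laplace_0[simp]: "laplace 0 = 0"
  by (simp add: laplace_alt)
lemma laplace_bconst_mult: "laplace (bconst c * P) = bconst c * laplace P"
  by (simp only: laplace_alt Dx_bconst_mult Dy_bconst_mult distrib_left)
lemma laplace_sum: "laplace (\<Sum>i\<in>A. f i) = (\<Sum>i\<in>A. laplace (f i))"
  by (induction A rule: infinite_finite_induct) (auto simp: laplace_add)
lemma laplace_diff: "laplace (P - Q) = laplace P - laplace Q"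
  using laplace_add[of "P - Q" Q] by simp

lemma lapk_add: "(laplace ^^ k) (P + Q) = (laplace ^^ k) P + (laplace ^^ k) Q"
  by (induction k) (auto simp: laplace_add)
lemma lapk_0[simp]: "(laplace ^^ k) 0 = 0"
  by (induction k) auto
lemma lapk_bconst_mult: "(laplace ^^ k) (bconst c * P) = bconst c * (laplace ^^ k) P"
  by (induction k) (auto simp: laplace_bconst_mult)
lemma lapk_sum: "(laplace ^^ k) (\<Sum>i\<in>A. f i) = (\<Sum>i\<in>A. (laplace ^^ k) (f i))"
  by (induction A rule: infinite_finite_induct) (auto simp: lapk_add)
lemma lapk_diff: "(laplace ^^ k) (P - Q) = (laplace ^^ k) P - (laplace ^^ k) Q"
  using lapk_add[of k "P - Q" Q] by simp

definition ff :: "nat \<Rightarrow> nat \<Rightarrow> nat" where "ff n k = (\<Prod>t<k. n - t)"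

lemma ff_Suc: "ff n (Suc k) = ff n k * (n - k)"
  by (simp add: ff_def)

lemma ff_eq_0: "ff n k = 0 \<longleftrightarrow> n < k"
  unfolding ff_def by auto

lemma lapk_E: "(laplace ^^ k) (E N j) =
   bconst (4 ^ k * of_nat (ff j k) * of_nat (ff (N - j) k)) * E (N - 2 * k) (j - k)"
proof (induction k)
  case 0 then show ?case by (simp add: ff_def)
next
  case (Suc k)
  have "(laplace ^^ Suc k) (E N j) = bconst (4 ^ k * of_nat (ff j k) * of_nat (ff (N - j) k)) *
     (bconst (4 * of_nat (j - k) * of_nat (N - 2 * k - (j - k))) * E (N - 2 * k - 2) (j - k - 1))"
    by (simp add: Suc laplace_bconst_mult laplace_E)
  also have "\<dots> = bconst (4 ^ k * of_nat (ff j k) * of_nat (ff (N - j) k) *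
     (4 * of_nat (j - k) * of_nat (N - 2 * k - (j - k)))) * E (N - 2 * Suc k) (j - Suc k)"
    by (simp add: bconst_mult mult.assoc)
  also have "(4 ^ k * of_nat (ff j k) * of_nat (ff (N - j) k) *
     (4 * of_nat (j - k) * of_nat (N - 2 * k - (j - k)))) =
     (4 ^ Suc k * of_nat (ff j (Suc k)) * of_nat (ff (N - j) (Suc k)) :: complex)"
  proof (cases "k \<le> j \<and> k \<le> N - j")
    case True
    then have "N - 2 * k - (j - k) = N - j - k" by simp
    then show ?thesis by (simp add: ff_Suc)
  next
    case False
    then have "ff j k = 0 \<or> ff (N - j) k = 0" using ff_eq_0 by auto
    moreover have "ff j (Suc k) = 0 \<or> ff (N - j) (Suc k) = 0" using False ff_eq_0 by auto
    ultimately show ?thesis by auto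
  qed
  finally show ?case .
qed

definition hy :: "real \<Rightarrow> complex poly \<Rightarrow> complex" where "hy y c = poly c (complex_of_real y)"

lemma coeff_map_hy: "coeff (map_poly (hy y) P) n = hy y (coeff P n)"
  by (simp add: coeff_map_poly hy_def)

lemma mp_add: "map_poly (hy y) (A + B) = map_poly (hy y) A + map_poly (hy y) B"
  by (rule poly_eqI) (simp add: coeff_map_hy hy_def)
lemma mp_smult: "map_poly (hy y) (Polynomial.smult a B) = Polynomial.smult (hy y a) (map_poly (hy y) B)"
  by (rule poly_eqI) (simp add: coeff_map_hy hy_def)
lemma mp_pCons0: "map_poly (hy y) (pCons 0 B) = pCons 0 (map_poly (hy y) B)"
  by (rule poly_eqI) (simp add: coeff_map_hy hy_def coeff_pCons split: nat.splits)
lemma mp_mult: "map_poly (hy y) (P * Q) = map_poly (hy y) P * map_poly (hy y) Q"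
proof (induction P)
  case 0 then show ?case by simp
next
  case (pCons a P)
  have "map_poly (hy y) (pCons a P * Q) = Polynomial.smult (hy y a) (map_poly (hy y) Q) + pCons 0 (map_poly (hy y) (P * Q))"
    by (simp add: mp_add mp_smult mp_pCons0)
  also have "\<dots> = map_poly (hy y) (pCons a P) * map_poly (hy y) Q"
  proof -
    have "map_poly (hy y) (pCons a P) = pCons (hy y a) (map_poly (hy y) P)"
      by (rule poly_eqI) (simp add: coeff_map_hy coeff_pCons hy_def split: nat.splits)
    then show ?thesis using pCons.IH by simp
  qed
  finally show ?case .
qed

lemma beval_hom:
  "beval (P * Q) x y = beval P x y * beval Q x y"
  "beval (P + Q) x y = beval P x y + beval Q x y"
  "beval (P - Q) x y = beval P x y - beval Q x y"
proof -
  have bh: "beval P x y = poly (map_poly (hy y) P) (complex_of_real x)" for P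
    unfolding beval_def hy_def[abs_def] by simp
  have md: "map_poly (hy y) (P - Q) = map_poly (hy y) P - map_poly (hy y) Q"
    by (rule poly_eqI) (simp add: coeff_map_hy hy_def)
  show "beval (P * Q) x y = beval P x y * beval Q x y"
    "beval (P + Q) x y = beval P x y + beval Q x y"
    "beval (P - Q) x y = beval P x y - beval Q x y"
    unfolding bh by (simp_all add: mp_mult mp_add md)
qed

lemma beval_bconst[simp]: "beval (bconst c) x y = c"
  by (simp add: beval_def bconst_def map_poly_pCons)
lemma beval_1[simp]: "beval 1 x y = 1"
  using beval_bconst[of 1] by simp
lemma beval_0[simp]: "beval 0 x y = 0"
  using beval_bconst[of 0] by simp
lemma beval_bX[simp]: "beval bX x y = complex_of_real x"
  by (simp add: beval_def bX_def map_poly_pCons)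
lemma beval_bY[simp]: "beval bY x y = complex_of_real y"
  by (simp add: beval_def bY_def map_poly_pCons)
lemma beval_power: "beval (P ^ n) x y = beval P x y ^ n"
  by (induction n) (auto simp: beval_hom)
lemma beval_prod: "beval (\<Prod>i\<in>A. f i) x y = (\<Prod>i\<in>A. beval (f i) x y)"
  by (induction A rule: infinite_finite_induct) (auto simp: beval_hom)
lemma beval_sum: "beval (\<Sum>i\<in>A. f i) x y = (\<Sum>i\<in>A. beval (f i) x y)"
  by (induction A rule: infinite_finite_induct) (auto simp: beval_hom)
lemma beval_Z[simp]: "beval Z x y = complex_of_real x + \<i> * complex_of_real y"
  by (simp add: Z_def beval_hom)
lemma beval_Zb[simp]: "beval Zb x y = complex_of_real x - \<i> * complex_of_real y"
  by (simp add: Zb_def beval_hom)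
lemma beval_E: "beval (E N j) x y = (complex_of_real x + \<i> * complex_of_real y) ^ j *
    (complex_of_real x - \<i> * complex_of_real y) ^ (N - j)"
  by (simp add: E_def beval_hom beval_power)

lemma homog_0[simp]: "0 \<in> homog_polys N" by (simp add: homog_polys_def)
lemma homog_add: assumes "P \<in> homog_polys N" "Q \<in> homog_polys N" shows "P + Q \<in> homog_polys N"
  unfolding homog_polys_def
proof (intro CollectI allI impI)
  fix i j assume "coeff (coeff (P + Q) i) j \<noteq> 0"
  then have "coeff (coeff P i) j \<noteq> 0 \<or> coeff (coeff Q i) j \<noteq> 0" by auto
  then show "i + j = N" using assms unfolding homog_polys_def by auto
qed
lemma homog_diff: assumes "P \<in> homog_polys N" "Q \<in> homog_polys N" shows "P - Q \<in> homog_polys N"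
  unfolding homog_polys_def
proof (intro CollectI allI impI)
  fix i j assume "coeff (coeff (P - Q) i) j \<noteq> 0"
  then have "coeff (coeff P i) j \<noteq> 0 \<or> coeff (coeff Q i) j \<noteq> 0" by auto
  then show "i + j = N" using assms unfolding homog_polys_def by auto
qed
lemma homog_sum: "(\<And>i. i \<in> A \<Longrightarrow> f i \<in> homog_polys N) \<Longrightarrow> (\<Sum>i\<in>A. f i) \<in> homog_polys N"
  by (induction A rule: infinite_finite_induct) (auto intro: homog_add)

lemma homog_mult: assumes "P \<in> homog_polys a" "Q \<in> homog_polys b"
  shows "P * Q \<in> homog_polys (a + b)"
  unfolding homog_polys_def
proof (intro CollectI allI impI)
  fix i j assume nz: "coeff (coeff (P * Q) i) j \<noteq> 0"
  show "i + j = a + b"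
  proof (rule ccontr)
    assume ne: "i + j \<noteq> a + b"
    have "coeff (coeff (P * Q) i) j = (\<Sum>k\<le>i. \<Sum>l\<le>j. coeff (coeff P k) l * coeff (coeff Q (i - k)) (j - l))"
      by (simp add: coeff_mult coeff_sum)
    also have "\<dots> = 0"
    proof (intro sum.neutral ballI)
      fix k l assume k: "k \<in> {..i}" and l: "l \<in> {..j}"
      show "coeff (coeff P k) l * coeff (coeff Q (i - k)) (j - l) = 0"
      proof (rule ccontr)
        assume "coeff (coeff P k) l * coeff (coeff Q (i - k)) (j - l) \<noteq> 0"
        then have "k + l = a" "(i - k) + (j - l) = b" using assms unfolding homog_polys_def by auto
        then show False using ne k l by auto
      qed
    qed
    finally show False using nz by simp
  qed
qed

lemma homog_power: "P \<in> homog_polys a \<Longrightarrow> P ^ n \<in> homog_polys (n * a)"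
proof (induction n)
  case 0 then show ?case by (auto simp: homog_polys_def one_pCons coeff_pCons split: nat.splits)
next
  case (Suc n) then show ?case using homog_mult[of P a "P ^ n" "n * a"] by simp
qed

lemma homog_bconst: "bconst c \<in> homog_polys 0"
  by (auto simp: homog_polys_def bconst_def coeff_pCons split: nat.splits)

lemma homog_bconst_mult: "P \<in> homog_polys N \<Longrightarrow> bconst c * P \<in> homog_polys N"
  using homog_mult[OF homog_bconst] by fastforce

lemma homog_bX: "bX \<in> homog_polys 1"
  by (auto simp: homog_polys_def bX_def coeff_pCons split: nat.splits)
lemma homog_bY: "bY \<in> homog_polys 1"
  by (auto simp: homog_polys_def bY_def coeff_pCons split: nat.splits)
lemma homog_Z: "Z \<in> homog_polys 1"
  unfolding Z_def by (intro homog_add homog_bX homog_bconst_mult homog_bY)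
lemma homog_Zb: "Zb \<in> homog_polys 1"
  unfolding Zb_def by (intro homog_diff homog_bX homog_bconst_mult homog_bY)
lemma homog_E: "j \<le> N \<Longrightarrow> E N j \<in> homog_polys N"
  unfolding E_def using homog_mult[OF homog_power[OF homog_Z] homog_power[OF homog_Zb], of j "N - j"]
  by simp

lemma homog_lincomb: "(\<Sum>j\<le>N. bconst (c j) * E N j) \<in> homog_polys N"
  by (intro homog_sum homog_bconst_mult homog_E) auto

definition inspan :: "nat \<Rightarrow> bpoly \<Rightarrow> bool" where
  "inspan N u \<longleftrightarrow> (\<exists>c. u = (\<Sum>j\<le>N. bconst (c j) * E N j))"

lemma inspan_0: "inspan N 0"
  unfolding inspan_def by (rule exI[of _ "\<lambda>_. 0"]) simp

lemma inspan_add: "inspan N u \<Longrightarrow> inspan N v \<Longrightarrow> inspan N (u + v)"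
  unfolding inspan_def
proof (elim exE)
  fix c d assume "u = (\<Sum>j\<le>N. bconst (c j) * E N j)" "v = (\<Sum>j\<le>N. bconst (d j) * E N j)"
  then show "\<exists>e. u + v = (\<Sum>j\<le>N. bconst (e j) * E N j)"
    by (intro exI[of _ "\<lambda>j. c j + d j"]) (simp add: bconst_add distrib_right sum.distrib)
qed

lemma inspan_scale: "inspan N u \<Longrightarrow> inspan N (bconst a * u)"
  unfolding inspan_def
proof (elim exE)
  fix c assume "u = (\<Sum>j\<le>N. bconst (c j) * E N j)"
  then show "\<exists>e. bconst a * u = (\<Sum>j\<le>N. bconst (e j) * E N j)"
    by (intro exI[of _ "\<lambda>j. a * c j"]) (simp add: bconst_mult sum_distrib_left mult.assoc)
qed

lemma inspan_sum: "(\<And>i. i \<in> A \<Longrightarrow> inspan N (f i)) \<Longrightarrow> inspan N (\<Sum>i\<in>A. f i)"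
  by (induction A rule: infinite_finite_induct) (auto intro: inspan_add inspan_0)

lemma E_mult_Z: "j \<le> N \<Longrightarrow> E N j * Z = E (Suc N) (Suc j)"
  by (simp add: E_def algebra_simps Suc_diff_le)
lemma E_mult_Zb: "j \<le> N \<Longrightarrow> E N j * Zb = E (Suc N) j"
  by (simp add: E_def algebra_simps Suc_diff_le)

lemma inspan_mult_Z: assumes "inspan N u" shows "inspan (Suc N) (u * Z)"
proof -
  obtain c where u: "u = (\<Sum>j\<le>N. bconst (c j) * E N j)" using assms unfolding inspan_def by blast
  have "u * Z = (\<Sum>j\<le>N. bconst (c j) * E (Suc N) (Suc j))"
    by (simp add: u sum_distrib_right mult.assoc E_mult_Z)
  also have "\<dots> = (\<Sum>j\<le>Suc N. bconst (if j = 0 then 0 else c (j - 1)) * E (Suc N) j)"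
    by (subst sum.atMost_Suc_shift) simp
  finally have eq: "u * Z = (\<Sum>j\<le>Suc N. bconst (if j = 0 then 0 else c (j - 1)) * E (Suc N) j)" .
  show ?thesis unfolding inspan_def by (rule exI[where x="\<lambda>j. if j = 0 then 0 else c (j - 1)"]) (simp only: eq)
qed

lemma inspan_mult_Zb: assumes "inspan N u" shows "inspan (Suc N) (u * Zb)"
proof -
  obtain c where u: "u = (\<Sum>j\<le>N. bconst (c j) * E N j)" using assms unfolding inspan_def by blast
  have "u * Zb = (\<Sum>j\<le>N. bconst (c j) * E (Suc N) j)"
    by (simp add: u sum_distrib_right mult.assoc E_mult_Zb)
  also have "\<dots> = (\<Sum>j\<le>Suc N. bconst (if j \<le> N then c j else 0) * E (Suc N) j)"
    by (simp add: sum.atMost_Suc)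
  finally have eq: "u * Zb = (\<Sum>j\<le>Suc N. bconst (if j \<le> N then c j else 0) * E (Suc N) j)" .
  show ?thesis unfolding inspan_def by (rule exI[where x="\<lambda>j. if j \<le> N then c j else 0"]) (simp only: eq)
qed

lemma bX_ZZb: "bX = bconst (1/2) * (Z + Zb)"
proof -
  have "Z + Zb = bconst 2 * bX" by (simp add: Z_def Zb_def bconst_of_nat[of 2, simplified])
  then have "bconst (1/2) * (Z + Zb) = bconst (1/2 * 2) * bX" by (simp only: bconst_mult mult.assoc)
  then show ?thesis by simp
qed

lemma bY_ZZb: "bY = bconst (- \<i> / 2) * (Z - Zb)"
proof -
  have "Z - Zb = bconst (2 * \<i>) * bY" by (simp add: Z_def Zb_def bconst_mult bconst_of_nat[of 2, simplified])
  then have "bconst (- \<i> / 2) * (Z - Zb) = bconst (- \<i> / 2 * (2 * \<i>)) * bY" by (simp only: bconst_mult mult.assoc)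
  then show ?thesis by simp
qed

lemma inspan_mult_bX: "inspan N u \<Longrightarrow> inspan (Suc N) (u * bX)"
proof -
  assume u: "inspan N u"
  have "u * bX = bconst (1/2) * (u * Z) + bconst (1/2) * (u * Zb)"
    unfolding bX_ZZb by (simp add: algebra_simps)
  then show ?thesis using u by (simp add: inspan_add inspan_scale inspan_mult_Z inspan_mult_Zb)
qed

lemma inspan_mult_bY: "inspan N u \<Longrightarrow> inspan (Suc N) (u * bY)"
proof -
  assume u: "inspan N u"
  have "u * bY = bconst (- \<i> / 2) * (u * Z) + bconst (\<i> / 2) * (u * Zb)"
    unfolding bY_ZZb by (simp add: algebra_simps bconst_minus)
  then show ?thesis using u by (simp add: inspan_add inspan_scale inspan_mult_Z inspan_mult_Zb)
qed

lemma inspan_1: "inspan 0 1"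
  unfolding inspan_def by (rule exI[of _ "\<lambda>_. 1"]) (simp add: E_def)

lemma inspan_monom: "inspan (i + k) (bX ^ i * bY ^ k)"
proof (induction k)
  case 0 show ?case
  proof (induction i)
    case 0 then show ?case using inspan_1 by simp
  next
    case (Suc i) then show ?case using inspan_mult_bX[of i "bX ^ i"] by (simp add: mult.commute)
  qed
next
  case (Suc k)
  have eq: "bX ^ i * bY ^ Suc k = bX ^ i * bY ^ k * bY" by (simp add: algebra_simps)
  show ?case unfolding eq add_Suc_right by (rule inspan_mult_bY[OF Suc])
qed

lemma one_bpoly: "[:[:1:]:] = (1::bpoly)" by (metis one_pCons)

lemma bmonom: "bconst c * bX ^ i * bY ^ k = monom (monom c k) i"
proof -
  have "bX ^ i = monom 1 i" by (simp add: bX_def monom_altdef)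
  moreover have "bY ^ k = [:monom 1 k:]"
  proof (induction k)
    case 0 then show ?case by (simp add: monom_0 one_bpoly)
  qed (auto simp: bY_def monom_altdef)
  ultimately show ?thesis
    by (simp add: bconst_def monom_altdef smult_monom one_bpoly)
qed

lemma sum_if_eq: "finite A \<Longrightarrow> (\<Sum>i\<in>A. if i = k \<and> P i then f i else 0) = (if k \<in> A \<and> P k then f k else 0)"
proof -
  assume A: "finite A"
  have "(\<Sum>i\<in>A. if i = k \<and> P i then f i else 0) = (\<Sum>i\<in>A. if i = k then (if P k then f k else 0) else 0)"
    by (rule sum.cong) auto
  also have "\<dots> = (if k \<in> A \<and> P k then f k else 0)" using A by (simp add: sum.delta)
  finally show ?thesis .
qed

lemma homog_expand: assumes "u \<in> homog_polys N"
  shows "u = (\<Sum>i\<le>N. bconst (coeff (coeff u i) (N - i)) * bX ^ i * bY ^ (N - i))"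
proof (rule poly_eqI, rule poly_eqI)
  fix i' j'
  have "coeff (coeff (\<Sum>i\<le>N. bconst (coeff (coeff u i) (N - i)) * bX ^ i * bY ^ (N - i)) i') j'
     = (\<Sum>i\<le>N. coeff (coeff (monom (monom (coeff (coeff u i) (N - i)) (N - i)) i) i') j')"
    by (simp only: bmonom coeff_sum)
  also have "\<dots> = (\<Sum>i\<le>N. if i = i' \<and> N - i = j' then coeff (coeff u i) (N - i) else 0)"
    by (rule sum.cong) (auto simp: coeff_monom)
  also have "\<dots> = coeff (coeff u i') j'"
  proof -
    have s: "(\<Sum>i\<le>N. if i = i' \<and> N - i = j' then coeff (coeff u i) (N - i) else 0) =
      (if i' \<in> {..N} \<and> N - i' = j' then coeff (coeff u i') (N - i') else 0)"
      by (rule sum_if_eq) simp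
    show ?thesis
    proof (cases "i' + j' = N")
      case True
      then show ?thesis unfolding s by auto
    next
      case False
      then have "coeff (coeff u i') j' = 0" using assms unfolding homog_polys_def by auto
      then show ?thesis unfolding s using False by auto
    qed
  qed
  finally show "coeff (coeff u i') j' = coeff (coeff (\<Sum>i\<le>N. bconst (coeff (coeff u i) (N - i)) * bX ^ i * bY ^ (N - i)) i') j'"
    by simp
qed

lemma homog_inspan: assumes "u \<in> homog_polys N" shows "inspan N u"
proof -
  have "inspan N (\<Sum>i\<le>N. bconst (coeff (coeff u i) (N - i)) * (bX ^ i * bY ^ (N - i)))"
    by (intro inspan_sum inspan_scale) (use inspan_monom in \<open>metis add_diff_inverse_nat atMost_iff not_le\<close>)
  then show ?thesis using homog_expand[OF assms] by (simp add: mult.assoc)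
qed

lemma xi_ne: "complex_of_real x - \<i> \<noteq> 0"
  by (auto simp: complex_eq_iff)

lemma Amap_inj: "inj Amap"
proof (rule injI)
  fix a b assume "Amap a = Amap b"
  then have "(complex_of_real a + \<i>) * (complex_of_real b - \<i>) = (complex_of_real b + \<i>) * (complex_of_real a - \<i>)"
    unfolding Amap_def using xi_ne[of a] xi_ne[of b] by (simp add: frac_eq_eq)
  then show "a = b" by (simp add: complex_eq_iff algebra_simps)
qed

lemma beval_E_x1: "j \<le> N \<Longrightarrow> beval (E N j) x 1 = (complex_of_real x - \<i>) ^ N * Amap x ^ j"
proof -
  assume j: "j \<le> N"
  have ne: "(complex_of_real x - \<i>) ^ j \<noteq> 0" using xi_ne by simp
  have A: "Amap x ^ j * (complex_of_real x - \<i>) ^ j = (complex_of_real x + \<i>) ^ j"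
    unfolding Amap_def power_divide using ne by simp
  have "(complex_of_real x - \<i>) ^ N = (complex_of_real x - \<i>) ^ j * (complex_of_real x - \<i>) ^ (N - j)"
    using j by (simp flip: power_add)
  then have "(complex_of_real x - \<i>) ^ N * Amap x ^ j = (Amap x ^ j * (complex_of_real x - \<i>) ^ j) * (complex_of_real x - \<i>) ^ (N - j)"
    by (simp only: ac_simps)
  then show ?thesis unfolding A by (simp add: beval_E)
qed

lemma lincomb_zero: assumes "(\<Sum>j\<le>N. bconst (c j) * E N j) = 0" "j \<le> N" shows "c j = 0"
proof -
  define p where "p = (\<Sum>j\<le>N. monom (c j) j)"
  have "poly p (Amap x) = 0" for x
  proof -
    have ne: "(complex_of_real x - \<i>) ^ N \<noteq> 0" using xi_ne by simp
    have "0 = beval (\<Sum>j\<le>N. bconst (c j) * E N j) x 1" using assms by simp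
    also have "\<dots> = (\<Sum>j\<le>N. c j * ((complex_of_real x - \<i>) ^ N * Amap x ^ j))"
      unfolding beval_sum beval_hom beval_bconst by (rule sum.cong) (auto simp: beval_E_x1)
    also have "\<dots> = (complex_of_real x - \<i>) ^ N * (\<Sum>j\<le>N. c j * Amap x ^ j)"
      by (simp add: sum_distrib_left ac_simps)
    also have "(\<Sum>j\<le>N. c j * Amap x ^ j) = poly p (Amap x)"
      by (simp add: p_def poly_sum poly_monom)
    finally have "(complex_of_real x - \<i>) ^ N * poly p (Amap x) = 0" by (rule sym)
    with ne show ?thesis by (simp only: mult_eq_0_iff) blast
  qed
  then have "range Amap \<subseteq> {z. poly p z = 0}" by auto
  moreover have "infinite (range Amap)"
    using Amap_inj by (simp add: finite_image_iff infinite_UNIV_char_0)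
  ultimately have "infinite {z. poly p z = 0}" using finite_subset by blast
  then have "p = 0" using poly_roots_finite by blast
  then have "coeff p j = 0" by simp
  moreover have "coeff p j = c j" using assms(2) by (simp add: p_def coeff_sum coeff_monom)
  ultimately show ?thesis by simp
qed

definition zc :: "nat \<Rightarrow> bpoly \<Rightarrow> nat \<Rightarrow> complex" where
  "zc N u = (SOME c. u = (\<Sum>j\<le>N. bconst (c j) * E N j))"

lemma zc_expand: assumes "u \<in> homog_polys N" shows "u = (\<Sum>j\<le>N. bconst (zc N u j) * E N j)"
proof -
  obtain c where c: "u = (\<Sum>j\<le>N. bconst (c j) * E N j)"
    using homog_inspan[OF assms] unfolding inspan_def by blast
  show ?thesis
    using someI[where P="\<lambda>c. u = (\<Sum>j\<le>N. bconst (c j) * E N j)", OF c] unfolding zc_def by simp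
qed

lemma lincomb_unique: assumes "(\<Sum>j\<le>N. bconst (c j) * E N j) = (\<Sum>j\<le>N. bconst (d j) * E N j)" "j \<le> N"
  shows "c j = d j"
proof -
  have "(\<Sum>j\<le>N. bconst (c j - d j) * E N j) = 0"
    using assms(1) by (simp add: bconst_diff left_diff_distrib sum_subtractf)
  then have "c j - d j = 0" by (rule lincomb_zero[where c="\<lambda>j. c j - d j", OF _ assms(2)])
  then show ?thesis by simp
qed

lemma zc_lincomb: "j \<le> N \<Longrightarrow> zc N (\<Sum>j\<le>N. bconst (c j) * E N j) j = c j"
  using lincomb_unique[OF zc_expand[OF homog_lincomb, symmetric]] by blast

lemma alg_mu: fixes x s f b c :: real
  assumes "1 + x \<noteq> 0"
  shows "s * ((2 + 2 * x) * ((1 + 2 * x) * f)) / (4 * b * ((1 + x) * c)) = (2 * x + 1) / 2 * (s * f / (b * c))"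
proof -
  have e1: "s * ((2 + 2 * x) * ((1 + 2 * x) * f)) = (1 + x) * (2 * ((1 + 2 * x) * s * f))" by (simp add: algebra_simps)
  have e2: "4 * b * ((1 + x) * c) = (1 + x) * (2 * (2 * b * c))" by (simp add: algebra_simps)
  have "s * ((2 + 2 * x) * ((1 + 2 * x) * f)) / (4 * b * ((1 + x) * c)) = (2 * ((1 + 2 * x) * s * f)) / (2 * (2 * b * c))"
    unfolding e1 e2 using assms by (rule mult_divide_mult_cancel_left)
  also have "\<dots> = ((1 + 2 * x) * s * f) / (2 * b * c)" by (rule mult_divide_mult_cancel_left) simp
  also have "\<dots> = (2 * x + 1) / 2 * (s * f / (b * c))" by (simp add: ac_simps)
  finally show ?thesis .
qed

definition mu :: "nat \<Rightarrow> real" where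
  "mu k = (if even k then sqrt pi * fact k / (2 ^ k * fact (k div 2)) else 0)"

lemma mu_hbi: "has_bochner_integral lborel (\<lambda>x::real. exp (- x\<^sup>2) * x ^ k) (mu k)"
proof (cases "even k")
  case True
  then obtain m where k: "k = 2 * m" by blast
  have "has_bochner_integral lborel (\<lambda>x::real. exp (-x\<^sup>2) * x ^ (2 * m)) (sqrt pi * (fact (2 * m) / (2 ^ (2 * m) * fact m)))"
    using has_bochner_integral_even_function[OF gaussian_moment_even_pos[where k=m]] by simp
  then show ?thesis using k by (simp add: mu_def)
next
  case False
  then obtain m where k: "k = 2 * m + 1" using oddE by blast
  have "has_bochner_integral lborel (\<lambda>x::real. exp (- x\<^sup>2) * x ^ (2 * m + 1)) 0"
    using gaussian_moment_odd_pos[of m] by (rule has_bochner_integral_odd_function) simp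
  then show ?thesis using k by (simp add: mu_def)
qed

lemma mu_integrable: "integrable lborel (\<lambda>x::real. exp (- x\<^sup>2) * x ^ k)"
  using mu_hbi[of k] by (simp add: has_bochner_integral_iff)

lemma mu_0: "mu 0 = sqrt pi" by (simp add: mu_def)
lemma mu_1: "mu 1 = 0" by (simp add: mu_def)
lemma mu_1': "mu (Suc 0) = 0" by (simp add: mu_def)
lemma mu_rec: "mu (Suc (Suc k)) = (real k + 1) / 2 * mu k"
proof (cases "even k")
  case True
  then obtain m where k: "k = 2 * m" by blast
  define F where "F = sqrt pi * fact (2 * m) / (2 ^ (2 * m) * fact m)"
  have mk: "mu k = F" using k by (simp add: mu_def F_def)
  have f1: "fact (Suc (Suc (2 * m))) = (2 * real m + 2) * (2 * real m + 1) * (fact (2 * m) :: real)"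
    by (simp add: algebra_simps)
  have f2: "fact (Suc m) = (real m + 1) * (fact m :: real)" by simp
  have p2: "(2::real) ^ Suc (Suc (2 * m)) = 4 * 2 ^ (2 * m)" by simp
  have d: "Suc (Suc (2 * m)) div 2 = Suc m" by simp
  have "mu (Suc (Suc k)) = sqrt pi * ((2 + 2 * real m) * ((1 + 2 * real m) * fact (2 * m))) / (4 * 2 ^ (2 * m) * ((1 + real m) * fact m))"
    unfolding mu_def k using f1 f2 p2 d by simp
  also have "\<dots> = (2 * real m + 1) / 2 * F"
  proof -
    have nz: "fact m \<noteq> (0::real)" "(2::real) ^ (2 * m) \<noteq> 0" "1 + real m \<noteq> 0" by auto
    show ?thesis unfolding F_def using nz(3) by (rule alg_mu)
  qed
  finally show ?thesis using k mk by simp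
next
  case False
  then show ?thesis by (simp add: mu_def)
qed

lemma mu_shift: "mu (Suc i) = real i / 2 * mu (i - 1)"
  by (cases i) (simp_all add: mu_1' mu_rec)

definition gw :: "real \<Rightarrow> real \<Rightarrow> real" where "gw x y = exp (- (x\<^sup>2 + y\<^sup>2))"

lemma mono2_hbi: "has_bochner_integral (lborel :: (real \<times> real) measure)
   (\<lambda>(x, y). x ^ a * y ^ b * gw x y) (mu a * mu b)"
proof -
  define f where "f x = exp (- x\<^sup>2) * x ^ a" for x :: real
  define g where "g y = exp (- y\<^sup>2) * y ^ b" for y :: real
  have fi: "integrable lborel f" and gi: "integrable lborel g"
    unfolding f_def g_def by (rule mu_integrable)+
  have fv: "integral\<^sup>L lborel f = mu a" and gv: "integral\<^sup>L lborel g = mu b"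
    unfolding f_def g_def using mu_hbi by (simp_all add: has_bochner_integral_integral_eq)
  have eq: "(\<lambda>(x, y). x ^ a * y ^ b * gw x y) = (\<lambda>z. f (fst z) * g (snd z))"
  proof -
    have "gw x y = exp (- x\<^sup>2) * exp (- y\<^sup>2)" for x y by (simp add: gw_def flip: exp_add)
    then show ?thesis by (auto simp: f_def g_def fun_eq_iff ac_simps)
  qed
  have meas: "(\<lambda>z. f (fst z) * g (snd z)) \<in> borel_measurable (lborel \<Otimes>\<^sub>M lborel)"
    unfolding f_def g_def by measurable
  have int: "integrable (lborel \<Otimes>\<^sub>M lborel) (\<lambda>z. f (fst z) * g (snd z))"
  proof (rule lborel_pair.Fubini_integrable[OF meas])
    have "(\<lambda>x. \<integral>y. norm (f (fst (x, y)) * g (snd (x, y))) \<partial>lborel) = (\<lambda>x. norm (f x) * (\<integral>y. norm (g y) \<partial>lborel))"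
      by (simp add: norm_mult abs_mult integral_mult_right_zero)
    moreover have "integrable lborel (\<lambda>x. norm (f x) * (\<integral>y. norm (g y) \<partial>lborel))"
      using fi by (intro integrable_mult_left integrable_norm)
    ultimately show "integrable lborel (\<lambda>x. \<integral>y. norm (f (fst (x, y)) * g (snd (x, y))) \<partial>lborel)" by simp
    show "AE x in lborel. integrable lborel (\<lambda>y. f (fst (x, y)) * g (snd (x, y)))"
      using gi by (simp add: integrable_mult_right)
  qed
  have "integral\<^sup>L (lborel \<Otimes>\<^sub>M lborel) (\<lambda>z. f (fst z) * g (snd z)) = (\<integral>x. (\<integral>y. f (fst (x, y)) * g (snd (x, y)) \<partial>lborel) \<partial>lborel)"
    using lborel_pair.integral_fst'[OF int] by simp
  also have "\<dots> = (\<integral>x. f x * mu b \<partial>lborel)" by (simp add: gv)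
  also have "\<dots> = mu a * mu b" by (simp add: fv)
  finally have "has_bochner_integral (lborel \<Otimes>\<^sub>M lborel) (\<lambda>z. f (fst z) * g (snd z)) (mu a * mu b)"
    using int by (simp add: has_bochner_integral_iff)
  then show ?thesis unfolding eq lborel_prod .
qed

definition IF :: "bpoly \<Rightarrow> real \<times> real \<Rightarrow> complex" where
  "IF P = (\<lambda>(x, y). beval P x y * complex_of_real (gw x y))"

definition Lf :: "bpoly \<Rightarrow> complex" where
  "Lf P = integral\<^sup>L lborel (IF P)"

lemma beval_mono: "beval (bconst c * bX ^ i * bY ^ j) x y = c * complex_of_real (x ^ i * y ^ j)"
  by (simp add: beval_hom beval_power)

lemma IF_mono_hbi: "has_bochner_integral lborel (IF (bconst c * bX ^ i * bY ^ j)) (c * complex_of_real (mu i * mu j))"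
proof -
  have h: "has_bochner_integral lborel (\<lambda>z. complex_of_real ((\<lambda>(x, y). x ^ i * y ^ j * gw x y) z)) (complex_of_real (mu i * mu j))"
    by (rule has_bochner_integral_of_real[OF mono2_hbi])
  have "has_bochner_integral lborel (\<lambda>z. c * complex_of_real ((\<lambda>(x, y). x ^ i * y ^ j * gw x y) z)) (c * complex_of_real (mu i * mu j))"
    using h by (rule has_bochner_integral_mult_right)
  moreover have "(\<lambda>z. c * complex_of_real ((\<lambda>(x, y). x ^ i * y ^ j * gw x y) z)) = IF (bconst c * bX ^ i * bY ^ j)"
    by (auto simp: IF_def beval_mono fun_eq_iff)
  ultimately show ?thesis by simp
qed

lemma bexpand: "P = (\<Sum>i\<le>degree P. \<Sum>j\<le>degree (coeff P i). bconst (coeff (coeff P i) j) * bX ^ i * bY ^ j)"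
proof -
  have "P = (\<Sum>i\<le>degree P. monom (coeff P i) i)" by (simp add: poly_as_sum_of_monoms)
  also have "\<dots> = (\<Sum>i\<le>degree P. monom (\<Sum>j\<le>degree (coeff P i). monom (coeff (coeff P i) j) j) i)"
    by (simp add: poly_as_sum_of_monoms)
  also have "\<dots> = (\<Sum>i\<le>degree P. \<Sum>j\<le>degree (coeff P i). bconst (coeff (coeff P i) j) * bX ^ i * bY ^ j)"
    by (simp add: monom_sum bmonom)
  finally show ?thesis .
qed

lemma IF_add: "IF (P + Q) = (\<lambda>z. IF P z + IF Q z)"
  by (auto simp: IF_def beval_hom fun_eq_iff algebra_simps)
lemma IF_scale: "IF (bconst c * P) = (\<lambda>z. c * IF P z)"
  by (auto simp: IF_def beval_hom fun_eq_iff algebra_simps)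
lemma IF_sum: "IF (\<Sum>i\<in>A. f i) = (\<lambda>z. \<Sum>i\<in>A. IF (f i) z)"
  by (auto simp: IF_def beval_sum fun_eq_iff sum_distrib_right)

lemma IF_integrable: "integrable lborel (IF P)"
proof -
  have eq: "IF P = (\<lambda>z. \<Sum>i\<le>degree P. \<Sum>j\<le>degree (coeff P i). IF (bconst (coeff (coeff P i) j) * bX ^ i * bY ^ j) z)"
    by (subst bexpand) (simp add: IF_sum)
  show ?thesis unfolding eq
    by (intro Bochner_Integration.integrable_sum) (use IF_mono_hbi in \<open>simp add: has_bochner_integral_iff\<close>)
qed

lemma Lf_add: "Lf (P + Q) = Lf P + Lf Q"
  unfolding Lf_def IF_add by (rule Bochner_Integration.integral_add) (rule IF_integrable)+
lemma Lf_scale: "Lf (bconst c * P) = c * Lf P"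
  unfolding Lf_def IF_scale by simp
lemma Lf_sum: "Lf (\<Sum>i\<in>A. f i) = (\<Sum>i\<in>A. Lf (f i))"
  unfolding Lf_def IF_sum by (rule Bochner_Integration.integral_sum) (rule IF_integrable)
lemma Lf_0: "Lf 0 = 0"
  using Lf_scale[of 0 0] by simp
lemma Lf_mono: "Lf (bconst c * bX ^ i * bY ^ j) = c * complex_of_real (mu i * mu j)"
  unfolding Lf_def using IF_mono_hbi by (simp add: has_bochner_integral_iff)

lemma Dy_1[simp]: "Dy 1 = 0" using Dy_bconst[of 1] by simp

lemma pderiv_bX_power: "pderiv (bX ^ i) = of_nat i * bX ^ (i - 1)"
proof (induction i)
  case (Suc i) then show ?case by (cases i) (auto simp: pderiv_mult algebra_simps)
qed simp
lemma pderiv_bY_power: "pderiv (bY ^ i) = 0"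
  by (induction i) (auto simp: pderiv_mult)
lemma Dy_bX_power: "Dy (bX ^ i) = 0"
  by (induction i) (auto simp: Dy_mult)
lemma Dy_bY_power: "Dy (bY ^ i) = of_nat i * bY ^ (i - 1)"
proof (induction i)
  case (Suc i) then show ?case by (cases i) (auto simp: Dy_mult algebra_simps)
qed simp

lemma pderiv_mono: "pderiv (bconst c * bX ^ i * bY ^ j) = bconst (c * of_nat i) * bX ^ (i - 1) * bY ^ j"
  by (simp add: pderiv_mult pderiv_bX_power pderiv_bY_power bconst_mult bconst_of_nat algebra_simps)
lemma Dy_mono: "Dy (bconst c * bX ^ i * bY ^ j) = bconst (c * of_nat j) * bX ^ i * bY ^ (j - 1)"
  by (simp add: Dy_mult Dy_bX_power Dy_bY_power bconst_mult bconst_of_nat algebra_simps)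

lemma Lf_bX: "Lf (bX * P) = 1/2 * Lf (pderiv P)"
proof -
  define m where "m i j = bconst (coeff (coeff P i) j) * bX ^ i * bY ^ j" for i j
  have P: "P = (\<Sum>i\<le>degree P. \<Sum>j\<le>degree (coeff P i). m i j)"
    unfolding m_def by (rule bexpand)
  have t: "Lf (bX * m i j) = 1/2 * Lf (pderiv (m i j))" for i j
  proof -
    have eq: "bX * m i j = bconst (coeff (coeff P i) j) * bX ^ Suc i * bY ^ j"
      by (simp add: m_def algebra_simps)
    have "Lf (bX * m i j) = coeff (coeff P i) j * complex_of_real (mu (Suc i) * mu j)"
      by (simp only: eq Lf_mono)
    moreover have "Lf (pderiv (m i j)) = coeff (coeff P i) j * of_nat i * complex_of_real (mu (i - 1) * mu j)"
      by (simp add: m_def pderiv_mono Lf_mono)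
    ultimately show ?thesis by (simp add: mu_shift)
  qed
  have "Lf (bX * P) = (\<Sum>i\<le>degree P. \<Sum>j\<le>degree (coeff P i). Lf (bX * m i j))"
    by (subst P) (simp add: sum_distrib_left Lf_sum)
  also have "\<dots> = (\<Sum>i\<le>degree P. \<Sum>j\<le>degree (coeff P i). 1/2 * Lf (pderiv (m i j)))"
    by (simp add: t)
  also have "\<dots> = 1/2 * Lf (pderiv P)"
    by (subst (2) P) (simp add: pderiv_sum' Lf_sum sum_distrib_left)
  finally show ?thesis .
qed

lemma Lf_bY: "Lf (bY * P) = 1/2 * Lf (Dy P)"
proof -
  define m where "m i j = bconst (coeff (coeff P i) j) * bX ^ i * bY ^ j" for i j
  have P: "P = (\<Sum>i\<le>degree P. \<Sum>j\<le>degree (coeff P i). m i j)"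
    unfolding m_def by (rule bexpand)
  have t: "Lf (bY * m i j) = 1/2 * Lf (Dy (m i j))" for i j
  proof -
    have eq: "bY * m i j = bconst (coeff (coeff P i) j) * bX ^ i * bY ^ Suc j"
      by (simp add: m_def algebra_simps)
    have "Lf (bY * m i j) = coeff (coeff P i) j * complex_of_real (mu i * mu (Suc j))"
      by (simp only: eq Lf_mono)
    moreover have "Lf (Dy (m i j)) = coeff (coeff P i) j * of_nat j * complex_of_real (mu i * mu (j - 1))"
      by (simp add: m_def Dy_mono Lf_mono)
    ultimately show ?thesis by (simp add: mu_shift)
  qed
  have "Lf (bY * P) = (\<Sum>i\<le>degree P. \<Sum>j\<le>degree (coeff P i). Lf (bY * m i j))"
    by (subst P) (simp add: sum_distrib_left Lf_sum)
  also have "\<dots> = (\<Sum>i\<le>degree P. \<Sum>j\<le>degree (coeff P i). 1/2 * Lf (Dy (m i j)))"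
    by (simp add: t)
  also have "\<dots> = 1/2 * Lf (Dy P)"
    by (subst (2) P) (simp add: Dy_sum Lf_sum sum_distrib_left)
  finally show ?thesis .
qed

lemma Lf_Z: "Lf (Z * P) = Lf (Dzb P)"
proof -
  have "Lf (Z * P) = Lf (bX * P) + \<i> * Lf (bY * P)"
    by (simp add: Z_def distrib_right Lf_add mult.assoc Lf_scale)
  also have "\<dots> = 1/2 * Lf (pderiv P) + \<i> * (1/2 * Lf (Dy P))" by (simp add: Lf_bX Lf_bY)
  also have "\<dots> = Lf (Dzb P)"
  proof -
    have "Dzb P = bconst (1/2) * pderiv P + bconst (\<i> / 2) * Dy P"
      unfolding Dzb_def distrib_left mult.assoc[symmetric] bconst_mult[symmetric] by simp
    then show ?thesis by (simp add: Lf_scale Lf_add)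
  qed
  finally show ?thesis .
qed

lemma Lf_Zb: "Lf (Zb * P) = Lf (Dz P)"
proof -
  have "Zb * P = bX * P + bconst (- \<i>) * (bY * P)"
    by (simp add: Zb_def algebra_simps bconst_minus)
  then have "Lf (Zb * P) = Lf (bX * P) + (- \<i>) * Lf (bY * P)"
    by (simp add: Lf_add Lf_scale)
  also have "\<dots> = 1/2 * Lf (pderiv P) + (- \<i>) * (1/2 * Lf (Dy P))" by (simp add: Lf_bX Lf_bY)
  also have "\<dots> = Lf (Dz P)"
  proof -
    have "Dz P = bconst (1/2) * pderiv P + bconst (- \<i> / 2) * Dy P"
      unfolding Dz_def right_diff_distrib mult.assoc[symmetric] bconst_mult[symmetric]
      by (simp add: bconst_minus)
    then show ?thesis by (simp add: Lf_scale Lf_add)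
  qed
  finally show ?thesis .
qed

lemma Lf_1: "Lf 1 = complex_of_real pi"
  using Lf_mono[of 1 0 0] by (simp add: mu_0)

lemma Lf_of_nat_mult: "Lf (of_nat n * P) = of_nat n * Lf P"
  using Lf_scale[of "of_nat n" P] by (simp add: bconst_of_nat)

lemma Lf_ZZb: "Lf (Z ^ a * Zb ^ b) = (if a = b then complex_of_real (fact a * pi) else 0)"
proof (induction a arbitrary: b)
  case 0
  show ?case
  proof (cases b)
    case 0 then show ?thesis by (simp add: Lf_1)
  next
    case (Suc b')
    have "Lf (Z ^ 0 * Zb ^ b) = Lf (Zb * Zb ^ b')" by (simp add: Suc)
    also have "\<dots> = 0" by (simp add: Lf_Zb Dz_power Lf_0)
    finally show ?thesis using Suc by simp
  qed
next
  case (Suc a)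
  have "Lf (Z ^ Suc a * Zb ^ b) = Lf (Z * (Z ^ a * Zb ^ b))" by (simp add: mult.assoc)
  also have "\<dots> = of_nat b * Lf (Z ^ a * Zb ^ (b - 1))"
    by (simp add: Lf_Z Dzb_ZZb mult.assoc Lf_of_nat_mult)
  also have "\<dots> = (if Suc a = b then complex_of_real (fact (Suc a) * pi) else 0)"
  proof (cases b)
    case 0 then show ?thesis by simp
  next
    case (Suc b')
    then show ?thesis by (simp add: Suc.IH)
  qed
  finally show ?case .
qed

lemma Lf_pair: "j \<le> N \<Longrightarrow> k \<le> N \<Longrightarrow>
  Lf (E N j * (Zb ^ k * Z ^ (N - k))) = (if j = k then complex_of_real (fact N * pi) else 0)"
proof -
  assume j: "j \<le> N" and k: "k \<le> N"
  have "E N j * (Zb ^ k * Z ^ (N - k)) = Z ^ (j + (N - k)) * Zb ^ ((N - j) + k)"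
    by (simp add: E_def power_add ac_simps)
  moreover have "(j + (N - k) = (N - j) + k) \<longleftrightarrow> j = k" using j k by auto
  moreover have "j = k \<Longrightarrow> j + (N - k) = N" using k by auto
  ultimately show ?thesis by (simp add: Lf_ZZb)
qed

lemma bconst_mult_mult: "bconst a * X * (bconst b * Y) = bconst (a * b) * (X * Y)"
  by (simp add: bconst_mult ac_simps)

lemma fischer_lincomb:
  "fischer_norm (\<Sum>j\<le>N. bconst (c j) * E N j) = sqrt (pi * fact N * (\<Sum>j\<le>N. (cmod (c j))\<^sup>2))"
proof -
  define P where "P = (\<Sum>j\<le>N. bconst (c j) * E N j)"
  define Pc where "Pc = (\<Sum>k\<le>N. bconst (cnj (c k)) * (Zb ^ k * Z ^ (N - k)))"
  have h1: "cnj (beval P x y) = beval Pc x y" for x y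
  proof -
    define w where "w = complex_of_real x + \<i> * complex_of_real y"
    define wb where "wb = complex_of_real x - \<i> * complex_of_real y"
    have cw: "cnj w = wb" "cnj wb = w" unfolding w_def wb_def by (simp_all add: complex_eq_iff)
    have "beval P x y = (\<Sum>j\<le>N. c j * (w ^ j * wb ^ (N - j)))"
      unfolding P_def w_def wb_def by (simp add: beval_sum beval_hom beval_E)
    moreover have "beval Pc x y = (\<Sum>j\<le>N. cnj (c j) * (wb ^ j * w ^ (N - j)))"
      unfolding Pc_def w_def wb_def by (simp add: beval_sum beval_hom beval_power)
    ultimately show ?thesis by (simp add: cnj_sum cw)
  qed
  have h2: "(\<lambda>z. complex_of_real ((\<lambda>(x, y). (cmod (beval P x y))\<^sup>2 * exp (- (x\<^sup>2 + y\<^sup>2))) z)) = IF (P * Pc)"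
  proof
    fix z :: "real \<times> real"
    obtain x y where z: "z = (x, y)" by (cases z)
    have "complex_of_real ((cmod (beval P x y))\<^sup>2 * exp (- (x\<^sup>2 + y\<^sup>2))) =
        (beval P x y * cnj (beval P x y)) * complex_of_real (gw x y)"
      by (simp only: of_real_mult complex_norm_square gw_def)
    also have "\<dots> = IF (P * Pc) (x, y)" by (simp add: IF_def h1 beval_hom)
    finally show "complex_of_real ((\<lambda>(x, y). (cmod (beval P x y))\<^sup>2 * exp (- (x\<^sup>2 + y\<^sup>2))) z) = IF (P * Pc) z"
      using z by simp
  qed
  have h3: "complex_of_real (integral\<^sup>L lborel (\<lambda>(x, y). (cmod (beval P x y))\<^sup>2 * exp (- (x\<^sup>2 + y\<^sup>2)))) = Lf (P * Pc)"
    unfolding Lf_def h2[symmetric] by simp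
  have "P * Pc = (\<Sum>j\<le>N. \<Sum>k\<le>N. bconst (c j * cnj (c k)) * (E N j * (Zb ^ k * Z ^ (N - k))))"
    unfolding P_def Pc_def sum_product bconst_mult_mult ..
  then have "Lf (P * Pc) = (\<Sum>j\<le>N. \<Sum>k\<le>N. (c j * cnj (c k)) * Lf (E N j * (Zb ^ k * Z ^ (N - k))))"
    by (simp add: Lf_sum Lf_scale)
  also have "\<dots> = (\<Sum>j\<le>N. \<Sum>k\<le>N. if k = j then c j * cnj (c j) * complex_of_real (fact N * pi) else 0)"
    by (intro sum.cong refl) (auto simp: Lf_pair)
  also have "\<dots> = (\<Sum>j\<le>N. c j * cnj (c j) * complex_of_real (fact N * pi))"
    by (simp add: sum.delta)
  also have "\<dots> = (\<Sum>j\<le>N. complex_of_real (pi * fact N * (cmod (c j))\<^sup>2))"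
  proof (rule sum.cong[OF refl])
    fix j
    have "c j * cnj (c j) * complex_of_real (fact N * pi) = complex_of_real ((cmod (c j))\<^sup>2) * complex_of_real (fact N * pi)"
      by (simp only: complex_norm_square)
    also have "\<dots> = complex_of_real (pi * fact N * (cmod (c j))\<^sup>2)"
      by (simp only: of_real_mult[symmetric] mult_ac)
    finally show "c j * cnj (c j) * complex_of_real (fact N * pi) = complex_of_real (pi * fact N * (cmod (c j))\<^sup>2)" .
  qed
  also have "\<dots> = complex_of_real (pi * fact N * (\<Sum>j\<le>N. (cmod (c j))\<^sup>2))"
    by (simp only: of_real_sum sum_distrib_left)
  finally have "complex_of_real (integral\<^sup>L lborel (\<lambda>(x, y). (cmod (beval P x y))\<^sup>2 * exp (- (x\<^sup>2 + y\<^sup>2)))) = complex_of_real (pi * fact N * (\<Sum>j\<le>N. (cmod (c j))\<^sup>2))"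
    unfolding h3 .
  then have "integral\<^sup>L lborel (\<lambda>(x, y). (cmod (beval P x y))\<^sup>2 * exp (- (x\<^sup>2 + y\<^sup>2))) = pi * fact N * (\<Sum>j\<le>N. (cmod (c j))\<^sup>2)"
    by (simp only: of_real_eq_iff)
  then show ?thesis unfolding fischer_norm_def P_def by simp
qed

definition kap :: "nat \<Rightarrow> nat \<Rightarrow> nat \<Rightarrow> nat" where
  "kap p N j = 4 ^ p * ff j p * ff (N - j) p"

lemma kap_pos: "p \<le> j \<Longrightarrow> j \<le> N - p \<Longrightarrow> kap p N j > 0"
  unfolding kap_def using ff_eq_0[of j p] ff_eq_0[of "N - j" p] by auto

lemma sum_mid:
  fixes m p :: nat and g :: "nat \<Rightarrow> 'b::comm_monoid_add"
  assumes "\<And>j. j \<le> m + 2 * p \<Longrightarrow> j < p \<or> m + p < j \<Longrightarrow> g j = 0"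
  shows "(\<Sum>j\<le>m + 2 * p. g j) = (\<Sum>i\<le>m. g (i + p))"
proof -
  have "(\<Sum>j\<le>m + 2 * p. g j) = (\<Sum>j\<in>{p..m + p}. g j)"
    by (rule sum.mono_neutral_right) (auto intro: assms)
  also have "\<dots> = (\<Sum>i\<in>{0..m}. g (i + p))"
    using sum.shift_bounds_cl_nat_ivl[of g 0 p m] by simp
  finally show ?thesis by (simp add: atLeast0AtMost)
qed

lemma lapk_lincomb:
  "(laplace ^^ p) (\<Sum>j\<le>m + 2 * p. bconst (c j) * E (m + 2 * p) j) =
   (\<Sum>i\<le>m. bconst (c (i + p) * of_nat (kap p (m + 2 * p) (i + p))) * E m i)"
proof -
  have "(laplace ^^ p) (\<Sum>j\<le>m + 2 * p. bconst (c j) * E (m + 2 * p) j) =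
     (\<Sum>j\<le>m + 2 * p. bconst (c j * of_nat (kap p (m + 2 * p) j)) * E (m + 2 * p - 2 * p) (j - p))"
    by (simp add: lapk_sum lapk_bconst_mult lapk_E kap_def bconst_mult mult.assoc)
  also have "\<dots> = (\<Sum>i\<le>m. bconst (c (i + p) * of_nat (kap p (m + 2 * p) (i + p))) * E (m + 2 * p - 2 * p) (i + p - p))"
  proof (rule sum_mid)
    fix j assume "j \<le> m + 2 * p" "j < p \<or> m + p < j"
    then have "kap p (m + 2 * p) j = 0" unfolding kap_def using ff_eq_0 by auto
    then show "bconst (c j * of_nat (kap p (m + 2 * p) j)) * E (m + 2 * p - 2 * p) (j - p) = 0" by simp
  qed
  also have "\<dots> = (\<Sum>i\<le>m. bconst (c (i + p) * of_nat (kap p (m + 2 * p) (i + p))) * E m i)"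
    by simp
  finally show ?thesis .
qed

lemma homog_prod: "finite A \<Longrightarrow> (\<And>i. i \<in> A \<Longrightarrow> f i \<in> homog_polys 1) \<Longrightarrow> (\<Prod>i\<in>A. f i) \<in> homog_polys (card A)"
proof (induction A rule: finite_induct)
  case empty then show ?case using homog_bconst[of 1] by simp
next
  case (insert x A)
  then show ?case using homog_mult[of "f x" 1 "\<Prod>i\<in>A. f i" "card A"] by simp
qed

lemma homog_factor: "bX - bconst c * bY \<in> homog_polys 1"
  by (intro homog_diff homog_bX homog_bconst_mult homog_bY)

lemma Pa_homog: assumes "p \<ge> 1" shows "Pa p a \<in> homog_polys (2 * p)"
proof -
  have "(\<Prod>j\<in>{1..2*p-1}. bX - bconst (complex_of_real (a j)) * bY) \<in> homog_polys (card {1..2*p-1})"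
    by (rule homog_prod[OF _ homog_factor]) simp
  then have "Pa p a \<in> homog_polys (1 + (2 * p - 1))"
    unfolding Pa_def using homog_mult[OF homog_bY] by auto
  then show ?thesis using assms by simp
qed

lemma Pa_nonzero: "Pa p a \<noteq> 0"
proof -
  have "bY \<noteq> 0" by (simp add: bY_def)
  moreover have "bX - bconst c * bY \<noteq> 0" for c
  proof
    assume "bX - bconst c * bY = 0"
    then have "coeff (bX - bconst c * bY) 1 = 0" by simp
    then show False by (simp add: bX_def bY_def bconst_def)
  qed
  ultimately show ?thesis unfolding Pa_def by (simp add: prod_zero_iff)
qed

lemma Pa_vanish1: "p \<ge> 1 \<Longrightarrow> beval (Pa p a) 1 0 = 0"
  by (simp add: Pa_def beval_hom)

lemma Pa_vanish2: assumes "r \<in> {1..2*p-1}" shows "beval (Pa p a) (a r) 1 = 0"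
proof -
  have "beval (\<Prod>j\<in>{1..2*p-1}. bX - bconst (complex_of_real (a j)) * bY) (a r) 1 =
     (\<Prod>j\<in>{1..2*p-1}. complex_of_real (a r) - complex_of_real (a j))"
    by (simp add: beval_prod beval_hom)
  also have "\<dots> = 0" using assms by (intro prod_zero) auto
  finally show ?thesis by (simp add: Pa_def beval_hom)
qed

definition Aval :: "(nat \<Rightarrow> real) \<Rightarrow> nat \<Rightarrow> complex" where
  "Aval a r = (if r = 0 then 1 else Amap (a r))"

definition col :: "nat \<Rightarrow> nat \<Rightarrow> nat \<Rightarrow> nat" where
  "col m p k = (if k < p then k else m + 1 + k)"

lemma Mmat_alt: "Mmat m p a = mat (2 * p) (2 * p) (\<lambda>(r, k). Aval a r ^ col m p k)"
  unfolding Mmat_def Aval_def col_def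
  by (rule cong_mat) auto

lemma beval_lincomb_10: "beval (\<Sum>j\<le>N. bconst (c j) * E N j) 1 0 = (\<Sum>j\<le>N. c j)"
  by (simp add: beval_sum beval_hom beval_E)

lemma beval_lincomb_x1: "beval (\<Sum>j\<le>N. bconst (c j) * E N j) x 1 =
    (complex_of_real x - \<i>) ^ N * (\<Sum>j\<le>N. c j * Amap x ^ j)"
proof -
  have "beval (\<Sum>j\<le>N. bconst (c j) * E N j) x 1 = (\<Sum>j\<le>N. c j * ((complex_of_real x - \<i>) ^ N * Amap x ^ j))"
    unfolding beval_sum beval_hom beval_bconst by (rule sum.cong) (auto simp: beval_E_x1)
  also have "\<dots> = (complex_of_real x - \<i>) ^ N * (\<Sum>j\<le>N. c j * Amap x ^ j)"
    by (simp add: sum_distrib_left ac_simps)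
  finally show ?thesis .
qed

lemma vanish_eqs:
  assumes u: "u = (\<Sum>j\<le>N. bconst (c j) * E N j)" and p: "p \<ge> 1"
    and v1: "beval u 1 0 = 0" and v2: "\<And>r. r \<in> {1..2*p-1} \<Longrightarrow> beval u (a r) 1 = 0"
    and r: "r < 2 * p"
  shows "(\<Sum>j\<le>N. c j * Aval a r ^ j) = 0"
proof (cases "r = 0")
  case True then show ?thesis using v1 by (simp add: u beval_lincomb_10 Aval_def)
next
  case False
  then have "r \<in> {1..2*p-1}" using r by auto
  then have "(complex_of_real (a r) - \<i>) ^ N * (\<Sum>j\<le>N. c j * Amap (a r) ^ j) = 0"
    using v2 unfolding u beval_lincomb_x1 by blast
  moreover have "(complex_of_real (a r) - \<i>) ^ N \<noteq> 0" using xi_ne by simp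
  ultimately have "(\<Sum>j\<le>N. c j * Amap (a r) ^ j) = 0" using mult_eq_0_iff by blast
  then show ?thesis using False by (simp add: Aval_def)
qed

lemma split_sum:
  fixes g :: "nat \<Rightarrow> 'b::comm_monoid_add"
  shows "(\<Sum>j\<le>m + 2 * p. g j) = (\<Sum>k<2 * p. g (col m p k)) + (\<Sum>j\<in>{p..m + p}. g j)"
proof -
  have a: "(\<Sum>j\<le>m + 2 * p. g j) = (\<Sum>j\<in>{0..<p}. g j) + (\<Sum>j\<in>{p..<m + p + 1}. g j) + (\<Sum>j\<in>{m + p + 1..<m + 2 * p + 1}. g j)"
  proof -
    have "(\<Sum>j\<le>m + 2 * p. g j) = (\<Sum>j\<in>{0..<m + 2 * p + 1}. g j)"
      by (rule sum.cong) auto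
    also have "\<dots> = (\<Sum>j\<in>{0..<m + p + 1}. g j) + (\<Sum>j\<in>{m + p + 1..<m + 2 * p + 1}. g j)"
      by (rule sum.atLeastLessThan_concat[symmetric]) auto
    also have "(\<Sum>j\<in>{0..<m + p + 1}. g j) = (\<Sum>j\<in>{0..<p}. g j) + (\<Sum>j\<in>{p..<m + p + 1}. g j)"
      by (rule sum.atLeastLessThan_concat[symmetric]) auto
    finally show ?thesis .
  qed
  have b: "(\<Sum>k<2 * p. g (col m p k)) = (\<Sum>j\<in>{0..<p}. g j) + (\<Sum>j\<in>{m + p + 1..<m + 2 * p + 1}. g j)"
  proof -
    have "(\<Sum>k<2 * p. g (col m p k)) = (\<Sum>k\<in>{0..<p}. g (col m p k)) + (\<Sum>k\<in>{p..<2 * p}. g (col m p k))"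
      by (simp add: lessThan_atLeast0 sum.atLeastLessThan_concat)
    also have "(\<Sum>k\<in>{0..<p}. g (col m p k)) = (\<Sum>j\<in>{0..<p}. g j)"
      by (rule sum.cong) (auto simp: col_def)
    also have "(\<Sum>k\<in>{p..<2 * p}. g (col m p k)) = (\<Sum>k\<in>{p..<2 * p}. g (k + (m + 1)))"
      by (rule sum.cong) (auto simp: col_def ac_simps)
    also have "\<dots> = (\<Sum>j\<in>{p + (m + 1)..<2 * p + (m + 1)}. g j)"
      by (rule sum.shift_bounds_nat_ivl[symmetric])
    also have "{p + (m + 1)..<2 * p + (m + 1)} = {m + p + 1..<m + 2 * p + 1}" by auto
    finally show ?thesis .
  qed
  have c: "{p..m + p} = {p..<m + p + 1}" by auto
  show ?thesis unfolding a b c by (simp add: ac_simps)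
qed

lemma sum_delta_mult: "(k::nat) < n \<Longrightarrow> (\<Sum>i = 0..<n. (c::complex) * (if k = i then 1 else 0) * f i) = c * f k"
proof -
  assume k: "k < n"
  have "(\<Sum>i = 0..<n. c * (if k = i then 1 else 0) * f i) = (\<Sum>i = 0..<n. if k = i then c * f k else 0)"
    by (rule sum.cong) auto
  also have "\<dots> = (\<Sum>i\<in>{k}. c * f k)"
    by (rule sum.mono_neutral_cong_right) (use k in auto)
  also have "\<dots> = c * f k" by simp
  finally show ?thesis .
qed

lemma mat_solve:
  fixes A :: "complex mat"
  assumes A: "A \<in> carrier_mat n n" and d: "Determinant.det A \<noteq> 0" and w: "w \<in> carrier_vec n"
  shows "\<exists>v\<in>carrier_vec n. A *\<^sub>v v = w"
proof -
  define v where "v = (1 / Determinant.det A) \<cdot>\<^sub>v (adj_mat A *\<^sub>v w)"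
  have adj: "adj_mat A \<in> carrier_mat n n" "A * adj_mat A = Determinant.det A \<cdot>\<^sub>m 1\<^sub>m n"
    using adj_mat[OF A] by auto
  have v: "v \<in> carrier_vec n" using adj w by (simp add: v_def)
  have "A *\<^sub>v v = (1 / Determinant.det A) \<cdot>\<^sub>v (A *\<^sub>v (adj_mat A *\<^sub>v w))"
    unfolding v_def using A adj w by (simp add: mult_mat_vec)
  also have "A *\<^sub>v (adj_mat A *\<^sub>v w) = (A * adj_mat A) *\<^sub>v w"
    using assoc_mult_mat_vec[OF A adj(1) w] by (rule sym)
  also have "\<dots> = Determinant.det A \<cdot>\<^sub>v w"
    unfolding adj(2) using w by (intro eq_vecI) (auto simp: scalar_prod_def one_mat_def sum_delta_mult)
  also have "(1 / Determinant.det A) \<cdot>\<^sub>v (Determinant.det A \<cdot>\<^sub>v w) = w"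
    using d by (intro eq_vecI) auto
  finally show ?thesis using v by blast
qed

lemma mat_adj_solve:
  fixes A :: "complex mat"
  assumes A: "A \<in> carrier_mat n n" and h: "h \<in> carrier_vec n" and k: "k < n"
  shows "Determinant.det A * h $ k = (\<Sum>r<n. adj_mat A $$ (k, r) * (A *\<^sub>v h) $ r)"
proof -
  have adj: "adj_mat A \<in> carrier_mat n n" "adj_mat A * A = Determinant.det A \<cdot>\<^sub>m 1\<^sub>m n"
    using adj_mat[OF A] by auto
  have "(adj_mat A *\<^sub>v (A *\<^sub>v h)) $ k = ((adj_mat A * A) *\<^sub>v h) $ k"
    using assoc_mult_mat_vec[OF adj(1) A h] by simp
  also have "\<dots> = Determinant.det A * h $ k"
    unfolding adj(2) using h k by (auto simp: scalar_prod_def one_mat_def sum_delta_mult)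
  finally show ?thesis using adj k A h by (simp add: scalar_prod_def row_def lessThan_atLeast0)
qed

lemma det_bound:
  fixes A :: "complex mat"
  assumes A: "A \<in> carrier_mat n n" and b: "\<And>i j. i < n \<Longrightarrow> j < n \<Longrightarrow> cmod (A $$ (i, j)) \<le> 1"
  shows "cmod (Determinant.det A) \<le> fact n"
proof -
  have "Determinant.det A = (\<Sum>\<pi>\<in>{\<pi>. \<pi> permutes {0..<n}}. signof \<pi> * (\<Prod>i = 0..<n. A $$ (i, \<pi> i)))"
    using det_def'[OF A] .
  then have "cmod (Determinant.det A) \<le> (\<Sum>\<pi>\<in>{\<pi>. \<pi> permutes {0..<n}}. cmod (signof \<pi> * (\<Prod>i = 0..<n. A $$ (i, \<pi> i))))"
    by (simp add: norm_sum)
  also have "\<dots> \<le> (\<Sum>\<pi>\<in>{\<pi>. \<pi> permutes {0..<n}}. 1)"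
  proof (rule sum_mono)
    fix \<pi> assume "\<pi> \<in> {\<pi>. \<pi> permutes {0..<n}}"
    then have pi: "\<pi> permutes {0..<n}" by simp
    have "cmod (signof \<pi> :: complex) = 1" by (simp add: sign_def)
    moreover have "cmod (\<Prod>i = 0..<n. A $$ (i, \<pi> i)) \<le> 1"
      unfolding prod_norm[symmetric]
    proof (rule prod_le_1)
      fix i assume "i \<in> {0..<n}"
      then have "\<pi> i < n" using permutes_in_image[OF pi] by auto
      then show "0 \<le> cmod (A $$ (i, \<pi> i)) \<and> cmod (A $$ (i, \<pi> i)) \<le> 1" using b \<open>i \<in> {0..<n}\<close> by auto
    qed
    ultimately show "cmod (signof \<pi> * (\<Prod>i = 0..<n. A $$ (i, \<pi> i))) \<le> 1"
      by (simp add: norm_mult)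
  qed
  also have "\<dots> = fact n" using card_permutations[of "{0..<n}" n] by simp
  finally show ?thesis .
qed

lemma adj_bound:
  fixes A :: "complex mat"
  assumes A: "A \<in> carrier_mat n n" and b: "\<And>i j. i < n \<Longrightarrow> j < n \<Longrightarrow> cmod (A $$ (i, j)) \<le> 1"
    and k: "k < n" and r: "r < n"
  shows "cmod (adj_mat A $$ (k, r)) \<le> fact (n - 1)"
proof -
  have "adj_mat A $$ (k, r) = cofactor A r k" using A k r by (simp add: adj_mat_def)
  also have "\<dots> = (-1) ^ (r + k) * Determinant.det (mat_delete A r k)" by (simp add: cofactor_def)
  finally have e: "cmod (adj_mat A $$ (k, r)) = cmod (Determinant.det (mat_delete A r k))"
    by (simp add: norm_mult norm_power)
  have "cmod (Determinant.det (mat_delete A r k)) \<le> fact (n - 1)"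
  proof (rule det_bound)
    show "mat_delete A r k \<in> carrier_mat (n - 1) (n - 1)" using mat_delete_carrier[OF A] .
    fix i j assume "i < n - 1" "j < n - 1"
    then show "cmod (mat_delete A r k $$ (i, j)) \<le> 1" using A b
      by (auto simp: mat_delete_def)
  qed
  then show ?thesis using e by simp
qed

definition Fop :: "nat \<Rightarrow> (nat \<Rightarrow> real) \<Rightarrow> bpoly \<Rightarrow> bpoly" where
  "Fop p a q = (laplace ^^ p) (Pa p a * q)"

lemma struct_expand:
  assumes p1: "p \<ge> 1" and q: "q \<in> homog_polys m"
  shows "Pa p a * q = (\<Sum>j\<le>m + 2 * p. bconst (zc (m + 2 * p) (Pa p a * q) j) * E (m + 2 * p) j)"
proof -
  have "Pa p a * q \<in> homog_polys (2 * p + m)" by (rule homog_mult[OF Pa_homog[OF p1] q])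
  then have "Pa p a * q \<in> homog_polys (m + 2 * p)" by (simp add: ac_simps)
  then show ?thesis by (rule zc_expand)
qed

lemma struct_F:
  assumes p1: "p \<ge> 1" and q: "q \<in> homog_polys m"
  shows "Fop p a q = (\<Sum>i\<le>m. bconst (zc (m + 2 * p) (Pa p a * q) (i + p) * of_nat (kap p (m + 2 * p) (i + p))) * E m i)"
  unfolding Fop_def by (subst struct_expand[OF p1 q]) (rule lapk_lincomb)

lemma struct_zcF:
  assumes p1: "p \<ge> 1" and q: "q \<in> homog_polys m" and i: "i \<le> m"
  shows "zc m (Fop p a q) i = zc (m + 2 * p) (Pa p a * q) (i + p) * of_nat (kap p (m + 2 * p) (i + p))"
  unfolding struct_F[OF p1 q] using i by (rule zc_lincomb)

lemma struct_vanish: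
  assumes p1: "p \<ge> 1" and q: "q \<in> homog_polys m" and r: "r < 2 * p"
  shows "(\<Sum>j\<le>m + 2 * p. zc (m + 2 * p) (Pa p a * q) j * Aval a r ^ j) = 0"
proof (rule vanish_eqs[OF struct_expand[OF p1 q] p1 _ _ r])
  show "beval (Pa p a * q) 1 0 = 0" using Pa_vanish1[OF p1] by (simp add: beval_hom)
  show "beval (Pa p a * q) (a r) 1 = 0" if "r \<in> {1..2 * p - 1}" for r
    using Pa_vanish2[OF that] by (simp add: beval_hom)
qed

lemma struct_split:
  assumes p1: "p \<ge> 1" and q: "q \<in> homog_polys m" and r: "r < 2 * p"
  shows "(\<Sum>k<2 * p. zc (m + 2 * p) (Pa p a * q) (col m p k) * Aval a r ^ col m p k)
     + (\<Sum>j\<in>{p..m + p}. zc (m + 2 * p) (Pa p a * q) j * Aval a r ^ j) = 0"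
  using struct_vanish[OF p1 q r] unfolding split_sum .

lemma Mmat_carrier: "Mmat m p a \<in> carrier_mat (2 * p) (2 * p)"
  by (simp add: Mmat_alt)

lemma Mmat_mult_vec:
  assumes "v \<in> carrier_vec (2 * p)" "r < 2 * p"
  shows "(Mmat m p a *\<^sub>v v) $ r = (\<Sum>k<2 * p. v $ k * Aval a r ^ col m p k)"
  using assms by (simp add: Mmat_alt scalar_prod_def lessThan_atLeast0 ac_simps)

lemma zc_zero: "j \<le> m \<Longrightarrow> zc m 0 j = 0"
  using zc_lincomb[of j m "\<lambda>_. 0"] by simp

lemma idx_cases: "j \<le> m + 2 * p \<Longrightarrow> j \<in> {p..m + p} \<or> (\<exists>k<2 * p. j = col m p k)"
proof -
  assume j: "j \<le> m + 2 * p"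
  show ?thesis
  proof (cases "j < p")
    case True then show ?thesis by (intro disjI2 exI[of _ j]) (auto simp: col_def)
  next
    case False
    show ?thesis
    proof (cases "j \<le> m + p")
      case True then show ?thesis using False by auto
    next
      case False
      then have "j = col m p (j - m - 1)" "j - m - 1 < 2 * p" using j by (auto simp: col_def)
      then show ?thesis by blast
    qed
  qed
qed

lemma Fop_inj0:
  assumes p1: "p \<ge> 1" and q: "q \<in> homog_polys m" and d: "Determinant.det (Mmat m p a) \<noteq> 0"
    and F0: "Fop p a q = 0"
  shows "q = 0"
proof -
  define c where "c = zc (m + 2 * p) (Pa p a * q)"
  have mid: "c j = 0" if "j \<in> {p..m + p}" for j
  proof -
    have i: "j - p \<le> m" and jp: "j - p + p = j" using that by auto
    have "zc m (Fop p a q) (j - p) = c j * of_nat (kap p (m + 2 * p) j)"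
      using struct_zcF[OF p1 q i] unfolding c_def jp .
    moreover have "zc m (Fop p a q) (j - p) = 0" using F0 zc_zero[OF i] by simp
    moreover have "kap p (m + 2 * p) j > 0" using that by (intro kap_pos) auto
    ultimately show ?thesis by simp
  qed
  define hv where "hv = vec (2 * p) (\<lambda>k. c (col m p k))"
  have hv: "hv \<in> carrier_vec (2 * p)" by (simp add: hv_def)
  have "Mmat m p a *\<^sub>v hv = 0\<^sub>v (2 * p)"
  proof (rule eq_vecI)
    fix r assume "r < dim_vec (0\<^sub>v (2 * p) :: complex vec)"
    then have r: "r < 2 * p" by simp
    have "(Mmat m p a *\<^sub>v hv) $ r = (\<Sum>k<2 * p. c (col m p k) * Aval a r ^ col m p k)"
      unfolding Mmat_mult_vec[OF hv r] by (rule sum.cong) (auto simp: hv_def)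
    also have "\<dots> = 0"
    proof -
      have "(\<Sum>j\<in>{p..m + p}. c j * Aval a r ^ j) = 0"
        by (rule sum.neutral) (simp add: mid)
      then show ?thesis using struct_split[OF p1 q r, of a] unfolding c_def by simp
    qed
    finally show "(Mmat m p a *\<^sub>v hv) $ r = 0\<^sub>v (2 * p) $ r" using r by simp
  qed (simp add: Mmat_alt)
  then have hz: "hv = 0\<^sub>v (2 * p)"
    using d det_0_iff_vec_prod_zero[OF Mmat_carrier[of m p a]] hv by blast
  have colz: "c (col m p k) = 0" if "k < 2 * p" for k
  proof -
    have "hv $ k = (0\<^sub>v (2 * p) :: complex vec) $ k" by (simp only: hz)
    then show ?thesis using that by (simp add: hv_def)
  qed
  have "c j = 0" if "j \<le> m + 2 * p" for j
    using idx_cases[OF that] mid colz by blast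
  then have "Pa p a * q = 0"
    using struct_expand[OF p1 q, where a=a] unfolding c_def[symmetric] by simp
  then show "q = 0" using Pa_nonzero by simp
qed

lemma Fop_diff: "Fop p a (q1 - q2) = Fop p a q1 - Fop p a q2"
  by (simp add: Fop_def right_diff_distrib lapk_diff)

lemma Fop_homog: "p \<ge> 1 \<Longrightarrow> q \<in> homog_polys m \<Longrightarrow> Fop p a q \<in> homog_polys m"
  unfolding struct_F by (rule homog_lincomb)

lemma Fop_inj:
  assumes p1: "p \<ge> 1" and d: "Determinant.det (Mmat m p a) \<noteq> 0"
  shows "inj_on (Fop p a) (homog_polys m)"
proof (rule inj_onI)
  fix q1 q2 assume q1: "q1 \<in> homog_polys m" and q2: "q2 \<in> homog_polys m" and e: "Fop p a q1 = Fop p a q2"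
  have "q1 - q2 = 0"
    by (rule Fop_inj0[OF p1 homog_diff[OF q1 q2] d]) (simp add: Fop_diff e)
  then show "q1 = q2" by simp
qed

lemma Fop_lincomb: "Fop p a (\<Sum>j\<in>A. bconst (v j) * g j) = (\<Sum>j\<in>A. bconst (v j) * Fop p a (g j))"
  unfolding Fop_def sum_distrib_left lapk_sum
  by (rule sum.cong) (simp_all only: mult.left_commute[of "Pa p a"] lapk_bconst_mult)

lemma Fop_surj:
  assumes p1: "p \<ge> 1" and d: "Determinant.det (Mmat m p a) \<noteq> 0" and f: "f \<in> homog_polys m"
  shows "\<exists>q\<in>homog_polys m. Fop p a q = f"
proof -
  define T where "T = mat (m + 1) (m + 1) (\<lambda>(i, j). zc m (Fop p a (E m j)) i)"
  have T: "T \<in> carrier_mat (m + 1) (m + 1)" by (simp add: T_def)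
  define qv where "qv v = (\<Sum>j\<le>m. bconst (v $ j) * E m j)" for v :: "complex vec"
  have qvh: "qv v \<in> homog_polys m" for v unfolding qv_def by (rule homog_lincomb)
  have FE: "Fop p a (E m j) = (\<Sum>i\<le>m. bconst (T $$ (i, j)) * E m i)" if "j \<le> m" for j
  proof -
    have "Fop p a (E m j) = (\<Sum>i\<le>m. bconst (zc m (Fop p a (E m j)) i) * E m i)"
      by (rule zc_expand[OF Fop_homog[OF p1 homog_E[OF that]]])
    also have "\<dots> = (\<Sum>i\<le>m. bconst (T $$ (i, j)) * E m i)"
      by (rule sum.cong) (use that in \<open>auto simp: T_def\<close>)
    finally show ?thesis .
  qed
  have Fqv: "Fop p a (qv v) = (\<Sum>i\<le>m. bconst ((T *\<^sub>v v) $ i) * E m i)" if v: "v \<in> carrier_vec (m + 1)" for v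
  proof -
    have "Fop p a (qv v) = (\<Sum>j\<le>m. bconst (v $ j) * (\<Sum>i\<le>m. bconst (T $$ (i, j)) * E m i))"
      unfolding qv_def Fop_lincomb by (rule sum.cong) (auto simp: FE)
    also have "\<dots> = (\<Sum>j\<le>m. \<Sum>i\<le>m. bconst (T $$ (i, j) * v $ j) * E m i)"
      unfolding sum_distrib_left by (intro sum.cong refl) (simp only: bconst_mult ac_simps)
    also have "\<dots> = (\<Sum>i\<le>m. \<Sum>j\<le>m. bconst (T $$ (i, j) * v $ j) * E m i)"
      by (rule sum.swap)
    also have "\<dots> = (\<Sum>i\<le>m. bconst ((T *\<^sub>v v) $ i) * E m i)"
    proof (rule sum.cong[OF refl])
      fix i assume i: "i \<in> {..m}"
      have "(T *\<^sub>v v) $ i = (\<Sum>j\<le>m. T $$ (i, j) * v $ j)"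
        using i v T by (simp add: scalar_prod_def atLeast0LessThan lessThan_Suc_atMost)
      then show "(\<Sum>j\<le>m. bconst (T $$ (i, j) * v $ j) * E m i) = bconst ((T *\<^sub>v v) $ i) * E m i"
        by (simp add: bconst_sum sum_distrib_right)
    qed
    finally show ?thesis .
  qed
  have dT: "Determinant.det T \<noteq> 0"
  proof
    assume "Determinant.det T = 0"
    then obtain v where v: "v \<in> carrier_vec (m + 1)" "v \<noteq> 0\<^sub>v (m + 1)" "T *\<^sub>v v = 0\<^sub>v (m + 1)"
      using det_0_iff_vec_prod_zero[OF T] by blast
    have "Fop p a (qv v) = 0" using Fqv[OF v(1)] v(3) by simp
    then have "qv v = 0" by (rule Fop_inj0[OF p1 qvh d])
    then have "v $ j = 0" if "j \<le> m" for j
      using lincomb_zero[where N=m and c="\<lambda>j. v $ j" and j=j] that unfolding qv_def by simp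
    then have "v = 0\<^sub>v (m + 1)" using v(1) by (intro eq_vecI) auto
    then show False using v(2) by simp
  qed
  define w where "w = vec (m + 1) (\<lambda>i. zc m f i)"
  obtain v where v: "v \<in> carrier_vec (m + 1)" "T *\<^sub>v v = w"
    using mat_solve[OF T dT, of w] by (auto simp: w_def)
  have "Fop p a (qv v) = (\<Sum>i\<le>m. bconst (zc m f i) * E m i)"
    unfolding Fqv[OF v(1)] v(2) by (rule sum.cong) (auto simp: w_def)
  also have "\<dots> = f" using zc_expand[OF f] by simp
  finally show ?thesis using qvh by blast
qed

lemma Fop_bij:
  assumes p1: "p \<ge> 1" and d: "Determinant.det (Mmat m p a) \<noteq> 0"
  shows "bij_betw (Fop p a) (homog_polys m) (homog_polys m)"
  unfolding bij_betw_def
proof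
  show "inj_on (Fop p a) (homog_polys m)" by (rule Fop_inj[OF p1 d])
  show "Fop p a ` homog_polys m = homog_polys m"
    using Fop_homog[OF p1] Fop_surj[OF p1 d] by blast
qed

lemma poly_sum_N: "degree (g :: complex poly) \<le> N \<Longrightarrow> poly g x = (\<Sum>j\<le>N. coeff g j * x ^ j)"
proof -
  assume d: "degree g \<le> N"
  have "poly g x = (\<Sum>j\<le>degree g. coeff g j * x ^ j)" by (simp add: poly_altdef)
  also have "\<dots> = (\<Sum>j\<le>N. coeff g j * x ^ j)"
    by (rule sum.mono_neutral_left) (use d in \<open>auto simp: coeff_eq_0\<close>)
  finally show ?thesis .
qed

lemma lagrange:
  fixes A w :: "nat \<Rightarrow> complex"
  assumes inj: "inj_on A {..<n}" and nN: "n \<le> Suc N"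
    and z: "\<And>j. j \<le> N \<Longrightarrow> (\<Sum>r<n. w r * A r ^ j) = 0" and r0: "r0 < n"
  shows "w r0 = 0"
proof -
  define S where "S = {..<n} - {r0}"
  define g where "g = (\<Prod>r\<in>S. [:- A r, 1:])"
  have fS: "finite S" by (simp add: S_def)
  have "degree g \<le> (\<Sum>r\<in>S. degree [:- A r, 1:])" unfolding g_def using degree_prod_sum_le[OF fS, of "\<lambda>r. [:- A r, 1:]"] by (simp add: o_def)
  also have "\<dots> = card S" by simp
  also have "card S = n - 1" using r0 by (simp add: S_def)
  finally have dg: "degree g \<le> N" using nN by simp
  have pg: "poly g x = (\<Prod>r\<in>S. x - A r)" for x by (simp add: g_def poly_prod)
  have "(\<Sum>r<n. w r * poly g (A r)) = (\<Sum>r<n. \<Sum>j\<le>N. w r * (coeff g j * A r ^ j))"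
    by (simp add: poly_sum_N[OF dg] sum_distrib_left)
  also have "\<dots> = (\<Sum>j\<le>N. \<Sum>r<n. w r * (coeff g j * A r ^ j))" by (rule sum.swap)
  also have "\<dots> = (\<Sum>j\<le>N. coeff g j * (\<Sum>r<n. w r * A r ^ j))"
    by (simp add: sum_distrib_left ac_simps)
  also have "\<dots> = 0" by (simp add: z)
  finally have s0: "(\<Sum>r<n. w r * poly g (A r)) = 0" .
  have "(\<Sum>r<n. w r * poly g (A r)) = (\<Sum>r\<in>{r0}. w r * poly g (A r))"
  proof (rule sum.mono_neutral_right)
    show "\<forall>i\<in>{..<n} - {r0}. w i * poly g (A i) = 0"
    proof
      fix i assume "i \<in> {..<n} - {r0}"
      then have "i \<in> S" by (simp add: S_def)
      then have "poly g (A i) = 0" unfolding pg by (intro prod_zero[OF fS]) auto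
      then show "w i * poly g (A i) = 0" by simp
    qed
  qed (use r0 in auto)
  then have "w r0 * poly g (A r0) = 0" using s0 by simp
  moreover have "poly g (A r0) \<noteq> 0"
  proof -
    have "A r0 - A r \<noteq> 0" if "r \<in> S" for r
    proof -
      from that have "r < n" "r \<noteq> r0" by (auto simp: S_def)
      then show "A r0 - A r \<noteq> 0" using inj r0 by (auto dest: inj_onD)
    qed
    then show ?thesis unfolding pg using fS by simp
  qed
  ultimately show ?thesis by simp
qed

lemma Amap_ne_1: "Amap x \<noteq> 1"
proof
  assume "Amap x = 1"
  then have "complex_of_real x + \<i> = complex_of_real x - \<i>"
    using xi_ne[of x] unfolding Amap_def by (simp add: divide_eq_1_iff)
  then show False by (simp add: complex_eq_iff)
qed

lemma Aval_inj:
  assumes "inj_on a {1..2 * p - 1}"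
  shows "inj_on (Aval a) {..<2 * p}"
proof (rule inj_onI)
  fix r s assume r: "r \<in> {..<2 * p}" and s: "s \<in> {..<2 * p}" and e: "Aval a r = Aval a s"
  show "r = s"
  proof (cases "r = 0")
    case True
    then show ?thesis using e Amap_ne_1 by (cases "s = 0") (auto simp: Aval_def)
  next
    case False
    show ?thesis
    proof (cases "s = 0")
      case True then show ?thesis using e Amap_ne_1 False by (auto simp: Aval_def)
    next
      case s0: False
      then have "Amap (a r) = Amap (a s)" using e False by (simp add: Aval_def)
      then have "a r = a s" using Amap_inj by (auto dest: injD)
      moreover have "r \<in> {1..2 * p - 1}" "s \<in> {1..2 * p - 1}" using r s False s0 by auto
      ultimately show ?thesis using assms by (auto dest: inj_onD)
    qed
  qed
qed

lemma MT_mult: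
  assumes "w \<in> carrier_vec (2 * p)" "k < 2 * p"
  shows "(transpose_mat (Mmat m p a) *\<^sub>v w) $ k = (\<Sum>r<2 * p. w $ r * Aval a r ^ col m p k)"
  using assms by (simp add: Mmat_alt scalar_prod_def lessThan_atLeast0 ac_simps)

lemma zc_E: "i0 \<le> m \<Longrightarrow> i \<le> m \<Longrightarrow> zc m (E m i0) i = (if i = i0 then 1 else 0)"
proof -
  assume i0: "i0 \<le> m" and i: "i \<le> m"
  have "E m i0 = (\<Sum>i\<le>m. bconst (if i = i0 then 1 else 0) * E m i)"
  proof -
    have "(\<Sum>i\<le>m. bconst (if i = i0 then 1 else 0) * E m i) = (\<Sum>i\<le>m. if i = i0 then E m i0 else 0)"
      by (rule sum.cong) auto
    also have "\<dots> = E m i0" using i0 by (simp add: sum.delta)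
    finally show ?thesis by simp
  qed
  then show ?thesis using zc_lincomb[OF i, of "\<lambda>i. if i = i0 then 1 else 0"] by simp
qed

lemma Fop_not_bij:
  assumes p1: "p \<ge> 1" and ia: "inj_on a {1..2 * p - 1}" and d: "Determinant.det (Mmat m p a) = 0"
  shows "\<not> bij_betw (Fop p a) (homog_polys m) (homog_polys m)"
proof
  assume bij: "bij_betw (Fop p a) (homog_polys m) (homog_polys m)"
  define M where "M = Mmat m p a"
  have MT: "transpose_mat M \<in> carrier_mat (2 * p) (2 * p)" using Mmat_carrier by (simp add: M_def)
  have "Determinant.det (transpose_mat M) = 0"
    using d det_transpose[OF Mmat_carrier[of m p a]] by (simp add: M_def)
  then obtain w where w: "w \<in> carrier_vec (2 * p)" "w \<noteq> 0\<^sub>v (2 * p)" "transpose_mat M *\<^sub>v w = 0\<^sub>v (2 * p)"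
    using det_0_iff_vec_prod_zero[OF MT] by blast
  define S where "S j = (\<Sum>r<2 * p. w $ r * Aval a r ^ j)" for j
  have Scol: "S (col m p k) = 0" if "k < 2 * p" for k
  proof -
    have "(transpose_mat M *\<^sub>v w) $ k = 0" using w(3) that by simp
    then show ?thesis using MT_mult[OF w(1) that] by (simp add: S_def M_def)
  qed
  have "\<exists>j0\<in>{p..m + p}. S j0 \<noteq> 0"
  proof (rule ccontr)
    assume "\<not> (\<exists>j0\<in>{p..m + p}. S j0 \<noteq> 0)"
    then have mid0: "S j = 0" if "j \<in> {p..m + p}" for j using that by blast
    have "S j = 0" if "j \<le> m + 2 * p" for j
      using idx_cases[OF that] mid0 Scol by blast
    then have "w $ r = 0" if "r < 2 * p" for r
      using lagrange[OF Aval_inj[OF ia], of "m + 2 * p" "\<lambda>r. w $ r" r] that unfolding S_def by simp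
    then have "w = 0\<^sub>v (2 * p)" using w(1) by (intro eq_vecI) auto
    then show False using w(2) by simp
  qed
  then obtain j0 where j0: "j0 \<in> {p..m + p}" "S j0 \<noteq> 0" by blast
  define f where "f = E m (j0 - p)"
  have i0: "j0 - p \<le> m" using j0 by auto
  have fh: "f \<in> homog_polys m" unfolding f_def by (rule homog_E[OF i0])
  then obtain q where q: "q \<in> homog_polys m" "Fop p a q = f"
    using bij unfolding bij_betw_def by (metis imageE)
  define c where "c = zc (m + 2 * p) (Pa p a * q)"
  have ck: "c (i + p) * of_nat (kap p (m + 2 * p) (i + p)) = (if i = j0 - p then 1 else 0)" if "i \<le> m" for i
    using struct_zcF[OF p1 q(1) that, where a=a] zc_E[OF i0 that] unfolding q(2) f_def c_def by simp
  have cmid: "c j = 0" if "j \<in> {p..m + p}" "j \<noteq> j0" for j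
  proof -
    have "j - p \<le> m" "j - p \<noteq> j0 - p" "j - p + p = j" using that j0 by auto
    then have "c j * of_nat (kap p (m + 2 * p) j) = 0" using ck[of "j - p"] by simp
    moreover have "kap p (m + 2 * p) j > 0" using that by (intro kap_pos) auto
    ultimately show ?thesis by simp
  qed
  have cj0: "c j0 \<noteq> 0"
  proof
    assume "c j0 = 0"
    moreover have "j0 - p + p = j0" using j0 by auto
    ultimately show False using ck[OF i0] by simp
  qed
  have eq_r: "(\<Sum>k<2 * p. c (col m p k) * Aval a r ^ col m p k) + c j0 * Aval a r ^ j0 = 0" if r: "r < 2 * p" for r
  proof -
    have "(\<Sum>j\<in>{p..m + p}. c j * Aval a r ^ j) = (\<Sum>j\<in>{j0}. c j * Aval a r ^ j)"
      by (rule sum.mono_neutral_right) (use j0 cmid in auto)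
    then show ?thesis using struct_split[OF p1 q(1) r, where a=a] unfolding c_def by simp
  qed
  have "0 = (\<Sum>r<2 * p. w $ r * ((\<Sum>k<2 * p. c (col m p k) * Aval a r ^ col m p k) + c j0 * Aval a r ^ j0))"
    by (simp add: eq_r)
  also have "\<dots> = (\<Sum>k<2 * p. c (col m p k) * S (col m p k)) + c j0 * S j0"
  proof -
    have "(\<Sum>r<2 * p. w $ r * (\<Sum>k<2 * p. c (col m p k) * Aval a r ^ col m p k))
       = (\<Sum>r<2 * p. \<Sum>k<2 * p. c (col m p k) * (w $ r * Aval a r ^ col m p k))"
      by (simp add: sum_distrib_left ac_simps)
    also have "\<dots> = (\<Sum>k<2 * p. \<Sum>r<2 * p. c (col m p k) * (w $ r * Aval a r ^ col m p k))"
      by (rule sum.swap)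
    also have "\<dots> = (\<Sum>k<2 * p. c (col m p k) * S (col m p k))"
      by (simp add: S_def sum_distrib_left)
    finally have e1: "(\<Sum>r<2 * p. w $ r * (\<Sum>k<2 * p. c (col m p k) * Aval a r ^ col m p k)) = (\<Sum>k<2 * p. c (col m p k) * S (col m p k))" .
    have e2: "(\<Sum>r<2 * p. w $ r * (c j0 * Aval a r ^ j0)) = c j0 * S j0"
      by (simp add: S_def sum_distrib_left ac_simps)
    show ?thesis using e1 e2 by (simp add: distrib_left sum.distrib)
  qed
  also have "\<dots> = c j0 * S j0" by (simp add: Scol)
  finally show False using cj0 j0(2) by simp
qed

lemma sum_inv_sq: "n \<ge> 1 \<Longrightarrow> (\<Sum>j\<in>{1..n}. 1 / (real j)\<^sup>2) \<le> 2 - 1 / real n"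
proof (induction n rule: dec_induct)
  case base then show ?case by simp
next
  case (step n)
  have n: "real n \<ge> 1" using step by simp
  have "(\<Sum>j\<in>{1..Suc n}. 1 / (real j)\<^sup>2) = (\<Sum>j\<in>{1..n}. 1 / (real j)\<^sup>2) + 1 / (real n + 1)\<^sup>2"
    by (simp add: add.commute)
  also have "\<dots> \<le> 2 - 1 / real n + 1 / (real n + 1)\<^sup>2" using step by simp
  also have "\<dots> \<le> 2 - 1 / (real n + 1)"
  proof -
    have a: "1 / (real n + 1)\<^sup>2 \<le> 1 / (real n * (real n + 1))"
    proof (rule frac_le)
      show "0 < real n * (real n + 1)" using n by simp
    qed (auto simp: power2_eq_square algebra_simps)
    have b: "1 / real n - 1 / (real n + 1) = 1 / (real n * (real n + 1))"
      using n by (simp add: field_simps)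
    have "1 / (real n + 1)\<^sup>2 \<le> 1 / real n - 1 / (real n + 1)" using a b by simp
    then show ?thesis by simp
  qed
  finally show ?case by (simp add: add.commute)
qed

lemma sum_inv_sq2: "(\<Sum>j\<in>A. 1 / (real j)\<^sup>2) \<le> 2" if "A \<subseteq> {1..n}" for A n
proof -
  have "(\<Sum>j\<in>A. 1 / (real j)\<^sup>2) \<le> (\<Sum>j\<in>{1..n}. 1 / (real j)\<^sup>2)"
    by (rule sum_mono2) (use that in auto)
  also have "\<dots> \<le> 2"
  proof (cases "n \<ge> 1")
    case True then show ?thesis using sum_inv_sq[OF True] by (smt (verit) divide_nonneg_nonneg of_nat_0_le_iff)
  next
    case False then show ?thesis by simp
  qed
  finally show ?thesis .
qed

lemma ff_lower: assumes "1 \<le> p" "p \<le> n" shows "(real n / real p) ^ p \<le> real (ff n p)"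
proof -
  have "(real n / real p) ^ p = (\<Prod>t<p. real n / real p)" by simp
  also have "\<dots> \<le> (\<Prod>t<p. real (n - t))"
  proof (rule prod_mono)
    fix t assume "t \<in> {..<p}"
    then have t: "t < p" by simp
    have "real n / real p \<le> real (n - t)"
    proof -
      have "real n \<le> real p * real (n - t)"
      proof -
        have "n - t \<ge> n - p + 1" using t assms by auto
        moreover have "p * (n - p + 1) \<ge> n"
        proof -
          have e: "p * (n - p + 1) = p * (n - p) + p" by (simp add: algebra_simps)
          have "n - p \<le> p * (n - p)" using assms(1) by simp
          then show ?thesis unfolding e using assms(2) by linarith
        qed
        ultimately have "n \<le> p * (n - t)" by (meson le_trans mult_le_mono2)
        then show ?thesis by (metis of_nat_le_iff of_nat_mult)
      qed
      moreover have pp: "real p > 0" using assms by simp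
      ultimately show ?thesis by (simp add: pos_divide_le_eq mult.commute del: of_nat_diff)
    qed
    then show "0 \<le> real n / real p \<and> real n / real p \<le> real (n - t)" by simp
  qed
  also have "\<dots> = real (ff n p)" by (simp add: ff_def)
  finally show ?thesis .
qed

lemma fact_le_pow: "fact (m + k) \<le> (fact m :: real) * (real (m + k)) ^ k"
proof (induction k)
  case 0 then show ?case by simp
next
  case (Suc k)
  have "fact (m + Suc k) = real (m + Suc k) * (fact (m + k) :: real)" by simp
  also have "\<dots> \<le> real (m + Suc k) * (fact m * (real (m + k)) ^ k)"
    using Suc by (intro mult_left_mono) auto
  also have "\<dots> \<le> real (m + Suc k) * (fact m * (real (m + Suc k)) ^ k)"
    by (intro mult_left_mono power_mono) auto
  also have "\<dots> = fact m * (real (m + Suc k)) ^ Suc k" by simp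
  finally show ?case .
qed

lemma X_lower: fixes x y :: real assumes "x \<ge> 1" "y \<ge> 1" shows "(x + y) / 2 \<le> x * y"
proof -
  have "0 \<le> (x - 1) * (y - 1)" using assms by simp
  then have "x + y - 1 \<le> x * y" by (simp add: algebra_simps)
  then show ?thesis using assms by simp
qed

lemma sq_sum_le: fixes a b :: real shows "(a + b)\<^sup>2 \<le> 2 * (a\<^sup>2 + b\<^sup>2)"
proof -
  have "0 \<le> (a - b)\<^sup>2" by simp
  then show ?thesis by (simp add: power2_eq_square algebra_simps)
qed

lemma inv_X2: fixes x y :: real assumes "x > 0" "y > 0"
  shows "1 / (x * y)\<^sup>2 \<le> 2 / (x + y)\<^sup>2 * (1 / x\<^sup>2 + 1 / y\<^sup>2)"
proof -
  have e: "1 / (x * y) = (1 / (x + y)) * (1 / x + 1 / y)" using assms by (simp add: field_simps)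
  have "(1 / x + 1 / y)\<^sup>2 \<le> 2 * ((1 / x)\<^sup>2 + (1 / y)\<^sup>2)"
    by (rule sq_sum_le)
  then have "(1 / (x * y))\<^sup>2 \<le> (1 / (x + y))\<^sup>2 * (2 * ((1 / x)\<^sup>2 + (1 / y)\<^sup>2))"
    unfolding e power_mult_distrib by (intro mult_left_mono) auto
  then show ?thesis by (simp add: power_divide)
qed

definition K3 :: "nat \<Rightarrow> real" where "K3 p = (real p ^ 4 / 2) * (real p ^ 2 / 2) ^ (2 * p - 2)"

lemma K3_nonneg: "K3 p \<ge> 0" by (simp add: K3_def)

lemma kap_lower:
  assumes p1: "p \<ge> 1" and j: "j \<in> {p..m + p}"
  shows "(4 * (real j * real (m + 2 * p - j)) / (real p)\<^sup>2) ^ p \<le> real (kap p (m + 2 * p) j)"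
proof -
  have "p \<le> j" using j by auto
  then have a: "(real j / real p) ^ p \<le> real (ff j p)" by (rule ff_lower[OF p1])
  have "p \<le> m + 2 * p - j" using j by auto
  then have b: "(real (m + 2 * p - j) / real p) ^ p \<le> real (ff (m + 2 * p - j) p)" by (rule ff_lower[OF p1])
  have "(4 * (real j * real (m + 2 * p - j)) / (real p)\<^sup>2) ^ p = 4 ^ p * ((real j / real p) ^ p * (real (m + 2 * p - j) / real p) ^ p)"
    by (simp add: power_mult_distrib power_divide power2_eq_square power_mult[symmetric] field_simps)
  also have "\<dots> \<le> 4 ^ p * (real (ff j p) * real (ff (m + 2 * p - j) p))"
    using a b by (intro mult_left_mono mult_mono) auto
  also have "\<dots> = real (kap p (m + 2 * p) j)" by (simp add: kap_def)
  finally show ?thesis .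
qed

lemma inv_kap2:
  assumes p1: "p \<ge> 1" and j: "j \<in> {p..m + p}"
  defines "N \<equiv> real (m + 2 * p)" and "X \<equiv> real j * real (m + 2 * p - j)"
  shows "1 / (real (kap p (m + 2 * p) j))\<^sup>2 \<le> (real p ^ 4 / 16) * (real p ^ 2 / (2 * N)) ^ (2 * p - 2) / X\<^sup>2"
proof -
  have jr: "real j \<ge> 1" and kr: "real (m + 2 * p - j) \<ge> 1" using j p1 by auto
  have XN: "N / 2 \<le> X" unfolding X_def N_def using X_lower[OF jr kr] j by (simp add: of_nat_diff)
  have Npos: "N > 0" unfolding N_def using p1 by simp
  have Xpos: "X > 0" using XN Npos by simp
  define Y where "Y = 4 * X / (real p)\<^sup>2"
  have Ypos: "Y > 0" unfolding Y_def using Xpos p1 by simp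
  have "Y ^ p \<le> real (kap p (m + 2 * p) j)" unfolding Y_def X_def by (rule kap_lower[OF p1 j])
  then have "(Y ^ p)\<^sup>2 \<le> (real (kap p (m + 2 * p) j))\<^sup>2" using Ypos by (intro power_mono) auto
  moreover have "(Y ^ p)\<^sup>2 = Y\<^sup>2 * Y ^ (2 * p - 2)"
  proof -
    have e: "2 * p = 2 + (2 * p - 2)" using p1 by simp
    have "(Y ^ p)\<^sup>2 = Y ^ (2 * p)" by (simp only: power_mult[symmetric] mult.commute)
    also have "\<dots> = Y ^ (2 + (2 * p - 2))" by (simp only: e[symmetric])
    also have "\<dots> = Y\<^sup>2 * Y ^ (2 * p - 2)" by (simp only: power_add)
    finally show ?thesis .
  qed
  moreover have "(2 * N / (real p)\<^sup>2) ^ (2 * p - 2) \<le> Y ^ (2 * p - 2)"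
    unfolding Y_def using XN Npos by (intro power_mono divide_right_mono) auto
  ultimately have low: "Y\<^sup>2 * (2 * N / (real p)\<^sup>2) ^ (2 * p - 2) \<le> (real (kap p (m + 2 * p) j))\<^sup>2"
    using Ypos by (smt (verit) mult_left_mono zero_le_power2)
  have lpos: "0 < Y\<^sup>2 * (2 * N / (real p)\<^sup>2) ^ (2 * p - 2)" using Ypos Npos p1 by simp
  have "1 / (real (kap p (m + 2 * p) j))\<^sup>2 \<le> 1 / (Y\<^sup>2 * (2 * N / (real p)\<^sup>2) ^ (2 * p - 2))"
    by (rule frac_le) (use low lpos in auto)
  also have "\<dots> = (real p ^ 4 / 16) * (real p ^ 2 / (2 * N)) ^ (2 * p - 2) / X\<^sup>2"
    unfolding Y_def using Xpos Npos p1 by (simp add: field_simps power_divide power2_eq_square power4_eq_xxxx)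
  finally show ?thesis .
qed

lemma sum_inv_X2:
  assumes p1: "p \<ge> 1"
  shows "(\<Sum>j\<in>{p..m + p}. 1 / (real j * real (m + 2 * p - j))\<^sup>2) \<le> 8 / (real (m + 2 * p))\<^sup>2"
proof -
  define N where "N = m + 2 * p"
  have "(\<Sum>j\<in>{p..m + p}. 1 / (real j * real (N - j))\<^sup>2)
      \<le> (\<Sum>j\<in>{p..m + p}. 2 / (real N)\<^sup>2 * (1 / (real j)\<^sup>2 + 1 / (real (N - j))\<^sup>2))"
  proof (rule sum_mono)
    fix j assume j: "j \<in> {p..m + p}"
    have "real j + real (N - j) = real N" using j by (simp add: N_def)
    moreover have "real j > 0" "real (N - j) > 0" using j p1 by (auto simp: N_def)
    ultimately show "1 / (real j * real (N - j))\<^sup>2 \<le> 2 / (real N)\<^sup>2 * (1 / (real j)\<^sup>2 + 1 / (real (N - j))\<^sup>2)"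
      using inv_X2[of "real j" "real (N - j)"] by simp
  qed
  also have "\<dots> = 2 / (real N)\<^sup>2 * ((\<Sum>j\<in>{p..m + p}. 1 / (real j)\<^sup>2) + (\<Sum>j\<in>{p..m + p}. 1 / (real (N - j))\<^sup>2))"
    by (simp only: sum.distrib[symmetric] sum_distrib_left)
  also have "\<dots> \<le> 2 / (real N)\<^sup>2 * (2 + 2)"
  proof (intro mult_left_mono add_mono)
    show "(\<Sum>j\<in>{p..m + p}. 1 / (real j)\<^sup>2) \<le> 2"
      by (rule sum_inv_sq2[of _ N]) (use p1 in \<open>auto simp: N_def\<close>)
    have "(\<Sum>j\<in>{p..m + p}. 1 / (real (N - j))\<^sup>2) = (\<Sum>s\<in>(\<lambda>j. N - j) ` {p..m + p}. 1 / (real s)\<^sup>2)"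
      by (rule sum.reindex[symmetric, unfolded o_def]) (auto simp: N_def inj_on_def)
    also have "\<dots> \<le> 2"
      by (rule sum_inv_sq2[of _ N]) (use p1 in \<open>auto simp: N_def\<close>)
    finally show "(\<Sum>j\<in>{p..m + p}. 1 / (real (N - j))\<^sup>2) \<le> 2" .
  qed auto
  finally show ?thesis by (simp add: N_def)
qed

lemma sum_inv_kap2:
  assumes p1: "p \<ge> 1"
  shows "(\<Sum>j\<in>{p..m + p}. 1 / (real (kap p (m + 2 * p) j))\<^sup>2) \<le> K3 p / (real (m + 2 * p)) ^ (2 * p)"
proof -
  define N where "N = real (m + 2 * p)"
  have Npos: "N > 0" using p1 by (simp add: N_def)
  define B where "B = (real p ^ 4 / 16) * (real p ^ 2 / (2 * N)) ^ (2 * p - 2)"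
  have B0: "B \<ge> 0" using Npos by (simp add: B_def)
  have "(\<Sum>j\<in>{p..m + p}. 1 / (real (kap p (m + 2 * p) j))\<^sup>2)
      \<le> (\<Sum>j\<in>{p..m + p}. B * (1 / (real j * real (m + 2 * p - j))\<^sup>2))"
    by (rule sum_mono) (use inv_kap2[OF p1] in \<open>simp add: B_def N_def\<close>)
  also have "\<dots> = B * (\<Sum>j\<in>{p..m + p}. 1 / (real j * real (m + 2 * p - j))\<^sup>2)"
    by (simp add: sum_distrib_left)
  also have "\<dots> \<le> B * (8 / N\<^sup>2)"
    using sum_inv_X2[OF p1, of m] B0 by (intro mult_left_mono) (auto simp: N_def)
  also have "\<dots> = K3 p / N ^ (2 * p)"
  proof -
    have e: "N ^ (2 * p) = N\<^sup>2 * N ^ (2 * p - 2)"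
    proof -
      have e: "2 * p = 2 + (2 * p - 2)" using p1 by simp
      have "N ^ (2 * p) = N ^ (2 + (2 * p - 2))" by (simp only: e[symmetric])
      then show ?thesis by (simp only: power_add)
    qed
    show ?thesis unfolding B_def K3_def e using Npos
      by (simp add: field_simps power_divide power_mult_distrib)
  qed
  finally show ?thesis by (simp add: N_def)
qed

lemma cmod_Amap: "cmod (Amap x) = 1"
proof -
  have "cmod (complex_of_real x + \<i>) = cmod (complex_of_real x - \<i>)"
    by (simp add: cmod_def)
  then show ?thesis using xi_ne[of x] by (simp add: Amap_def norm_divide)
qed

lemma cmod_Aval: "cmod (Aval a r) = 1"
  by (simp add: Aval_def cmod_Amap)

lemma cmod_Aval_pow: "cmod (Aval a r ^ n) = 1"
  by (simp add: norm_power cmod_Aval)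

lemma Mmat_entry_bound: "i < 2 * p \<Longrightarrow> j < 2 * p \<Longrightarrow> cmod (Mmat m p a $$ (i, j)) \<le> 1"
  by (simp add: Mmat_alt cmod_Aval_pow)

lemma det_Mmat_bound: "cmod (Determinant.det (Mmat m p a)) \<le> fact (2 * p)"
  by (rule det_bound[OF Mmat_carrier Mmat_entry_bound])

lemma mid_coeff_bounds:
  fixes c :: "nat \<Rightarrow> complex" and d :: "nat \<Rightarrow> complex"
  assumes p1: "p \<ge> 1"
    and cd: "\<And>i. i \<le> m \<Longrightarrow> d i = c (i + p) * of_nat (kap p (m + 2 * p) (i + p))"
  defines "T \<equiv> (\<Sum>j\<in>{p..m + p}. 1 / (real (kap p (m + 2 * p) j))\<^sup>2)"
    and "Sd \<equiv> (\<Sum>i\<le>m. (cmod (d i))\<^sup>2)"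
  shows "(\<Sum>j\<in>{p..m + p}. (cmod (c j))\<^sup>2) \<le> T * Sd"
    and "(\<Sum>j\<in>{p..m + p}. cmod (c j))\<^sup>2 \<le> T * Sd"
proof -
  define t where "t j = 1 / real (kap p (m + 2 * p) j)" for j
  have kp: "real (kap p (m + 2 * p) j) > 0" if "j \<in> {p..m + p}" for j
    using kap_pos[of p j "m + 2 * p"] that by auto
  have cj: "cmod (c j) = cmod (d (j - p)) * t j" if j: "j \<in> {p..m + p}" for j
  proof -
    have "d (j - p) = c j * of_nat (kap p (m + 2 * p) j)" using cd[of "j - p"] j by auto
    then have "cmod (d (j - p)) = cmod (c j) * real (kap p (m + 2 * p) j)"
      by (simp add: norm_mult)
    then show ?thesis using kp[OF j] by (simp add: t_def field_simps)
  qed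
  have T: "T = (\<Sum>j\<in>{p..m + p}. (t j)\<^sup>2)" by (simp add: T_def t_def power_divide)
  have Sd: "Sd = (\<Sum>j\<in>{p..m + p}. (cmod (d (j - p)))\<^sup>2)"
  proof -
    have "(\<Sum>j\<in>{p..m + p}. (cmod (d (j - p)))\<^sup>2) = (\<Sum>i\<in>{0..m}. (cmod (d (i + p - p)))\<^sup>2)"
      using sum.shift_bounds_cl_nat_ivl[of "\<lambda>j. (cmod (d (j - p)))\<^sup>2" 0 p m] by simp
    then show ?thesis by (simp add: Sd_def atLeast0AtMost)
  qed
  have tT: "(t j)\<^sup>2 \<le> T" if "j \<in> {p..m + p}" for j
    unfolding T by (rule member_le_sum) (use that in auto)
  have "(\<Sum>j\<in>{p..m + p}. (cmod (c j))\<^sup>2) = (\<Sum>j\<in>{p..m + p}. (cmod (d (j - p)))\<^sup>2 * (t j)\<^sup>2)"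
    by (rule sum.cong) (auto simp: cj power_mult_distrib)
  also have "\<dots> \<le> (\<Sum>j\<in>{p..m + p}. (cmod (d (j - p)))\<^sup>2 * T)"
    by (rule sum_mono) (rule mult_left_mono[OF tT], auto)
  also have "\<dots> = T * Sd" unfolding Sd sum_distrib_left by (simp add: ac_simps)
  finally show "(\<Sum>j\<in>{p..m + p}. (cmod (c j))\<^sup>2) \<le> T * Sd" .
  have "(\<Sum>j\<in>{p..m + p}. cmod (c j))\<^sup>2 = (\<Sum>j\<in>{p..m + p}. cmod (d (j - p)) * t j)\<^sup>2"
    by (simp add: cj)
  also have "\<dots> \<le> (\<Sum>j\<in>{p..m + p}. (cmod (d (j - p)))\<^sup>2) * (\<Sum>j\<in>{p..m + p}. (t j)\<^sup>2)"
    by (rule Cauchy_Schwarz_ineq_sum)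
  also have "\<dots> = T * Sd" by (simp add: T Sd)
  finally show "(\<Sum>j\<in>{p..m + p}. cmod (c j))\<^sup>2 \<le> T * Sd" .
qed

lemma free_bound:
  fixes a :: "nat \<Rightarrow> real"
  assumes p1: "p \<ge> 1" and q: "q \<in> homog_polys m" and k: "k < 2 * p"
  defines "c \<equiv> zc (m + 2 * p) (Pa p a * q)"
  shows "cmod (Determinant.det (Mmat m p a)) * cmod (c (col m p k)) \<le> fact (2 * p) * (\<Sum>j\<in>{p..m + p}. cmod (c j))"
proof -
  define M where "M = Mmat m p a"
  define B where "B = (\<Sum>j\<in>{p..m + p}. cmod (c j))"
  define hv where "hv = vec (2 * p) (\<lambda>k. c (col m p k))"
  have hv: "hv \<in> carrier_vec (2 * p)" by (simp add: hv_def)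
  have Mh: "cmod ((M *\<^sub>v hv) $ r) \<le> B" if r: "r < 2 * p" for r
  proof -
    have "(M *\<^sub>v hv) $ r = (\<Sum>k<2 * p. c (col m p k) * Aval a r ^ col m p k)"
      unfolding M_def Mmat_mult_vec[OF hv r] by (rule sum.cong) (auto simp: hv_def)
    also have "\<dots> = - (\<Sum>j\<in>{p..m + p}. c j * Aval a r ^ j)"
      using struct_split[OF p1 q r, where a=a] unfolding c_def by (simp add: eq_neg_iff_add_eq_0)
    finally have "cmod ((M *\<^sub>v hv) $ r) = cmod (\<Sum>j\<in>{p..m + p}. c j * Aval a r ^ j)" by simp
    also have "\<dots> \<le> (\<Sum>j\<in>{p..m + p}. cmod (c j * Aval a r ^ j))" by (rule norm_sum)
    also have "\<dots> = B" by (simp add: B_def norm_mult cmod_Aval_pow)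
    finally show ?thesis .
  qed
  have "Determinant.det M * hv $ k = (\<Sum>r<2 * p. adj_mat M $$ (k, r) * (M *\<^sub>v hv) $ r)"
    unfolding M_def by (rule mat_adj_solve[OF Mmat_carrier hv k])
  then have "cmod (Determinant.det M) * cmod (c (col m p k)) = cmod (\<Sum>r<2 * p. adj_mat M $$ (k, r) * (M *\<^sub>v hv) $ r)"
    using k by (simp add: hv_def flip: norm_mult)
  also have "\<dots> \<le> (\<Sum>r<2 * p. cmod (adj_mat M $$ (k, r)) * cmod ((M *\<^sub>v hv) $ r))"
    by (rule order_trans[OF norm_sum]) (simp add: norm_mult)
  also have "\<dots> \<le> (\<Sum>r<2 * p. fact (2 * p - 1) * B)"
  proof (rule sum_mono, rule mult_mono)
    fix r assume r: "r \<in> {..<2 * p}"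
    show "cmod (adj_mat M $$ (k, r)) \<le> fact (2 * p - 1)"
      unfolding M_def by (rule adj_bound[OF Mmat_carrier Mmat_entry_bound k]) (use r in auto)
    show "cmod ((M *\<^sub>v hv) $ r) \<le> B" using Mh r by auto
  qed auto
  also have "\<dots> = fact (2 * p) * B"
  proof -
    have "fact (2 * p) = real (2 * p) * (fact (2 * p - 1) :: real)"
      using p1 fact_reduce[of "2 * p"] by simp
    then show ?thesis by simp
  qed
  finally show ?thesis by (simp add: M_def B_def)
qed

definition Kc :: "nat \<Rightarrow> real" where "Kc p = (2 * real p + 1) * (fact (2 * p))\<^sup>2 * K3 p"

lemma Kc_nonneg: "Kc p \<ge> 0" by (simp add: Kc_def K3_nonneg)

lemma estimate:
  assumes p1: "p \<ge> 1" and q: "q \<in> homog_polys m" and dn: "Determinant.det (Mmat m p a) \<noteq> 0"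
  shows "fischer_norm (Pa p a * q) \<le> sqrt (Kc p) / cmod (Determinant.det (Mmat m p a)) * fischer_norm (Fop p a q)"
proof -
  define N where "N = m + 2 * p"
  define c where "c = zc (m + 2 * p) (Pa p a * q)"
  define dd where "dd i = c (i + p) * of_nat (kap p (m + 2 * p) (i + p))" for i
  define T where "T = (\<Sum>j\<in>{p..m + p}. 1 / (real (kap p (m + 2 * p) j))\<^sup>2)"
  define Sd where "Sd = (\<Sum>i\<le>m. (cmod (dd i))\<^sup>2)"
  define D where "D = cmod (Determinant.det (Mmat m p a))"
  define F2 where "F2 = (fact (2 * p) :: real)"
  have Dpos: "D > 0" using dn by (simp add: D_def)
  have DF: "D \<le> F2" unfolding D_def F2_def by (rule det_Mmat_bound)
  have T0: "T \<ge> 0" unfolding T_def by (intro sum_nonneg) auto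
  have Sd0: "Sd \<ge> 0" unfolding Sd_def by (intro sum_nonneg) auto
  have mb: "(\<Sum>j\<in>{p..m + p}. (cmod (c j))\<^sup>2) \<le> T * Sd"
    and mb2: "(\<Sum>j\<in>{p..m + p}. cmod (c j))\<^sup>2 \<le> T * Sd"
    using mid_coeff_bounds[OF p1, of m dd c] unfolding T_def Sd_def dd_def by auto
  have fb: "(cmod (c (col m p k)))\<^sup>2 \<le> F2\<^sup>2 * (T * Sd) / D\<^sup>2" if k: "k < 2 * p" for k
  proof -
    have "D * cmod (c (col m p k)) \<le> F2 * (\<Sum>j\<in>{p..m + p}. cmod (c j))"
      using free_bound[OF p1 q k, where a=a] unfolding D_def F2_def c_def .
    then have "(D * cmod (c (col m p k)))\<^sup>2 \<le> (F2 * (\<Sum>j\<in>{p..m + p}. cmod (c j)))\<^sup>2"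
      using Dpos by (intro power_mono) auto
    also have "\<dots> = F2\<^sup>2 * (\<Sum>j\<in>{p..m + p}. cmod (c j))\<^sup>2" by (simp add: power_mult_distrib)
    also have "\<dots> \<le> F2\<^sup>2 * (T * Sd)" using mb2 by (intro mult_left_mono) auto
    finally have "D\<^sup>2 * (cmod (c (col m p k)))\<^sup>2 \<le> F2\<^sup>2 * (T * Sd)" by (simp add: power_mult_distrib)
    then show ?thesis using Dpos by (simp add: field_simps)
  qed
  have "(\<Sum>j\<le>m + 2 * p. (cmod (c j))\<^sup>2) = (\<Sum>k<2 * p. (cmod (c (col m p k)))\<^sup>2) + (\<Sum>j\<in>{p..m + p}. (cmod (c j))\<^sup>2)"
    by (rule split_sum)
  also have "\<dots> \<le> (\<Sum>k<2 * p. F2\<^sup>2 * (T * Sd) / D\<^sup>2) + F2\<^sup>2 * (T * Sd) / D\<^sup>2"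
  proof (rule add_mono)
    show "(\<Sum>k<2 * p. (cmod (c (col m p k)))\<^sup>2) \<le> (\<Sum>k<2 * p. F2\<^sup>2 * (T * Sd) / D\<^sup>2)"
      by (rule sum_mono) (use fb in auto)
    have "1 \<le> F2\<^sup>2 / D\<^sup>2" using DF Dpos by (simp add: power_mono)
    then have "1 * (T * Sd) \<le> F2\<^sup>2 / D\<^sup>2 * (T * Sd)" using T0 Sd0 by (intro mult_right_mono) auto
    then show "(\<Sum>j\<in>{p..m + p}. (cmod (c j))\<^sup>2) \<le> F2\<^sup>2 * (T * Sd) / D\<^sup>2" using mb by simp
  qed
  also have "\<dots> = (2 * real p + 1) * F2\<^sup>2 * T * Sd / D\<^sup>2" by (simp add: field_simps add_divide_distrib)
  finally have tot: "(\<Sum>j\<le>m + 2 * p. (cmod (c j))\<^sup>2) \<le> (2 * real p + 1) * F2\<^sup>2 * T * Sd / D\<^sup>2" .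
  have TK: "T \<le> K3 p / (real N) ^ (2 * p)" unfolding T_def N_def by (rule sum_inv_kap2[OF p1])
  have Npos: "real N > 0" using p1 by (simp add: N_def)
  have fN: "fact N \<le> (fact m :: real) * (real N) ^ (2 * p)" unfolding N_def by (rule fact_le_pow)
  have "pi * fact N * (\<Sum>j\<le>m + 2 * p. (cmod (c j))\<^sup>2) \<le> pi * fact N * ((2 * real p + 1) * F2\<^sup>2 * T * Sd / D\<^sup>2)"
    using tot by (intro mult_left_mono) auto
  also have "\<dots> \<le> pi * fact N * ((2 * real p + 1) * F2\<^sup>2 * (K3 p / (real N) ^ (2 * p)) * Sd / D\<^sup>2)"
    using TK Sd0 Dpos by (intro mult_left_mono divide_right_mono mult_right_mono) auto
  also have "\<dots> = (fact N / (real N) ^ (2 * p)) * (Kc p / D\<^sup>2) * (pi * Sd)"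
    by (simp add: Kc_def F2_def field_simps)
  also have "\<dots> \<le> fact m * (Kc p / D\<^sup>2) * (pi * Sd)"
  proof (rule mult_right_mono, rule mult_right_mono)
    show "fact N / real N ^ (2 * p) \<le> fact m" using fN Npos by (simp add: field_simps)
  qed (use Kc_nonneg Sd0 in auto)
  also have "\<dots> = Kc p / D\<^sup>2 * (pi * fact m * Sd)" by simp
  finally have sq: "pi * fact N * (\<Sum>j\<le>m + 2 * p. (cmod (c j))\<^sup>2) \<le> Kc p / D\<^sup>2 * (pi * fact m * Sd)" .
  have f1: "fischer_norm (Pa p a * q) = sqrt (pi * fact N * (\<Sum>j\<le>m + 2 * p. (cmod (c j))\<^sup>2))"
    unfolding c_def N_def by (subst struct_expand[OF p1 q]) (rule fischer_lincomb)
  have f2: "fischer_norm (Fop p a q) = sqrt (pi * fact m * Sd)"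
    unfolding Sd_def dd_def c_def by (subst struct_F[OF p1 q]) (rule fischer_lincomb)
  have "fischer_norm (Pa p a * q) \<le> sqrt (Kc p / D\<^sup>2 * (pi * fact m * Sd))"
    unfolding f1 using sq by (rule real_sqrt_le_mono)
  also have "\<dots> = sqrt (Kc p) / D * fischer_norm (Fop p a q)"
    unfolding f2 using Dpos by (simp add: real_sqrt_mult real_sqrt_divide)
  finally show ?thesis by (simp add: D_def)
qed

theorem theorem4p1:
  fixes p :: nat and a :: "nat \<Rightarrow> real"
  assumes "p \<ge> 1"
    and "inj_on a {1..2*p-1}"
    and "\<forall>j\<in>{1..2*p-1}. a j \<noteq> 0"
  shows "(\<forall>m::nat. bij_betw (\<lambda>q. (laplace ^^ p) (Pa p a * q)) (homog_polys m) (homog_polys m)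
            \<longleftrightarrow> Determinant.det (Mmat m p a) \<noteq> 0)
       \<and> (\<exists>C::real. C \<ge> 0 \<and> (\<forall>m::nat. Determinant.det (Mmat m p a) \<noteq> 0 \<longrightarrow>
            (\<forall>q\<in>homog_polys m. fischer_norm (Pa p a * q)
               \<le> C / cmod (Determinant.det (Mmat m p a)) * fischer_norm ((laplace ^^ p) (Pa p a * q)))))"
proof -
  have F: "(\<lambda>q. (laplace ^^ p) (Pa p a * q)) = Fop p a" by (simp add: fun_eq_iff Fop_def)
  have part1: "bij_betw (Fop p a) (homog_polys m) (homog_polys m) \<longleftrightarrow> Determinant.det (Mmat m p a) \<noteq> 0" for m
    using Fop_bij[OF assms(1)] Fop_not_bij[OF assms(1,2)] by blast
  have part2: "fischer_norm (Pa p a * q) \<le> sqrt (Kc p) / cmod (Determinant.det (Mmat m p a)) * fischer_norm ((laplace ^^ p) (Pa p a * q))"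
    if "Determinant.det (Mmat m p a) \<noteq> 0" "q \<in> homog_polys m" for m q
    using estimate[OF assms(1) that(2,1)] by (simp add: Fop_def)
  have C: "sqrt (Kc p) \<ge> 0" using Kc_nonneg[of p] by simp
  show ?thesis
  proof
    show "\<forall>m. bij_betw (\<lambda>q. (laplace ^^ p) (Pa p a * q)) (homog_polys m) (homog_polys m) \<longleftrightarrow> Determinant.det (Mmat m p a) \<noteq> 0"
      unfolding F using part1 by blast
    show "\<exists>C::real. C \<ge> 0 \<and> (\<forall>m::nat. Determinant.det (Mmat m p a) \<noteq> 0 \<longrightarrow>
            (\<forall>q\<in>homog_polys m. fischer_norm (Pa p a * q)
               \<le> C / cmod (Determinant.det (Mmat m p a)) * fischer_norm ((laplace ^^ p) (Pa p a * q))))"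
      using C part2 by blast
  qed
qed

end
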